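(* Let $P\in\mathcal H$ be a right group-like projection such that $\mathcal V_P$ is a Frobenius algebra, and let $y\in{}_P\mathcal V$ be a cyclic element for the right $\mathcal V_P$-module ${}_P\mathcal V$ (so that $a\mapsto S(a)y$ is a linear bijection $\mathcal V_P\to{}_P\mathcal V$). Define $\iota_y:{}_P\mathcal V\to\mathcal V_P$ by $\iota_y(S(a)y)=a$ for $a\in\mathcal V_P$, and put $z_y=P_{(2)}\,\iota_y(P_{(1)})\in\mathcal V_P$. If $z_y$ is invertible in $\mathcal V_P$, then every right $\mathcal V_P$-module is completely reducible; in particular $\mathcal V_P$ is semisimple.
   Context: $k$ is a field; $\mathcal H$ is a Hopf algebra over $k$ with comultiplication $\Delta$ (Sweedler notation $\Delta(x)=x_{(1)}\otimes x_{(2)}$), counit $\varepsilon$, invertible antipode $S$, dual $\mathcal H'$. For $P\in\mathcal H$, $\mathcal V_P=\{(\nu\otimes\mathrm{id})\Delta(P):\nu\in\mathcal H'\}$ and ${}_P\mathcal V=\{(\mathrm{id}\otimes\nu)\Delta(P):\nu\in\mathcal H'\}$. A non-zero idempotent $P$ is a right group-like projection if $\Delta(P)(1\otimes P)=(1\otimes P)\Delta(P)=P\otimes P$; then $\mathcal V_P$ is a subalgebra, $(1\otimes a)\Delta(P)=(S(a)\otimes1)\Delta(P)$ for $a\in\mathcal V_P$, and ${}_P\mathcal V$ is a right $\mathcal V_P$-module via $x\cdot a=S(a)x$. A finite-dimensional unital algebra is Frobenius if it admits a non-degenerate bilinear form $\sigma$ with $\sigma(ab,c)=\sigma(a,bc)$.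 An element $y$ of a right module $M$ is cyclic if $y\cdot\mathcal V_P=M$. *)

theory Defs
  imports Complex_Main
begin

text \<open>
  Elements of the tensor product H (x) H are represented by finite lists of pairs
  (a_i, b_i) standing for sum_i a_i (x) b_i; two such lists represent the same tensor
  iff they agree under all products of linear functionals (true over a field).
\<close>

definition lin_fun :: "('k::field \<Rightarrow> 'h::ring_1 \<Rightarrow> 'h) \<Rightarrow> ('h \<Rightarrow> 'k) \<Rightarrow> bool" where
  "lin_fun sc \<phi> \<longleftrightarrow> (\<forall>c x y. \<phi> (sc c x + y) = c * \<phi> x + \<phi> y)"

definition lin_map :: "('k::field \<Rightarrow> 'h::ring_1 \<Rightarrow> 'h) \<Rightarrow> ('h \<Rightarrow> 'h) \<Rightarrow> bool" where
  "lin_map sc f \<longleftrightarrow> (\<forall>c x y. f (sc c x + y) = sc c (f x) + f y)"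

definition tens_eq :: "('k::field \<Rightarrow> 'h::ring_1 \<Rightarrow> 'h) \<Rightarrow> ('h \<times> 'h) list \<Rightarrow> ('h \<times> 'h) list \<Rightarrow> bool" where
  "tens_eq sc s t \<longleftrightarrow> (\<forall>\<phi> \<psi>. lin_fun sc \<phi> \<and> lin_fun sc \<psi> \<longrightarrow>
      (\<Sum>(a,b)\<leftarrow>s. \<phi> a * \<psi> b) = (\<Sum>(a,b)\<leftarrow>t. \<phi> a * \<psi> b))"

definition tens3_eq :: "('k::field \<Rightarrow> 'h::ring_1 \<Rightarrow> 'h) \<Rightarrow> ('h \<times> 'h \<times> 'h) list \<Rightarrow> ('h \<times> 'h \<times> 'h) list \<Rightarrow> bool" where
  "tens3_eq sc s t \<longleftrightarrow> (\<forall>\<phi> \<psi> \<chi>. lin_fun sc \<phi> \<and> lin_fun sc \<psi> \<and> lin_fun sc \<chi> \<longrightarrow>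
      (\<Sum>(a,b,c)\<leftarrow>s. \<phi> a * \<psi> b * \<chi> c) = (\<Sum>(a,b,c)\<leftarrow>t. \<phi> a * \<psi> b * \<chi> c))"

definition hopf_algebra ::
  "('k::field \<Rightarrow> 'h::ring_1 \<Rightarrow> 'h) \<Rightarrow> ('h \<Rightarrow> ('h \<times> 'h) list) \<Rightarrow> ('h \<Rightarrow> 'k) \<Rightarrow> ('h \<Rightarrow> 'h) \<Rightarrow> bool" where
  "hopf_algebra sc D eps S \<longleftrightarrow>
     Vector_Spaces.vector_space sc \<and>
     (\<forall>c x y. sc c (x * y) = sc c x * y \<and> sc c (x * y) = x * sc c y) \<and>
     (\<forall>c x y. tens_eq sc (D (sc c x + y)) (map (\<lambda>(a,b). (sc c a, b)) (D x) @ D y)) \<and>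
     (\<forall>x y. tens_eq sc (D (x * y))
        (concat (map (\<lambda>(a,b). map (\<lambda>(a',b'). (a * a', b * b')) (D y)) (D x)))) \<and>
     tens_eq sc (D 1) [(1,1)] \<and>
     (\<forall>x. tens3_eq sc
        (concat (map (\<lambda>(a,b). map (\<lambda>(a',b'). (a', b', b)) (D a)) (D x)))
        (concat (map (\<lambda>(a,b). map (\<lambda>(b',b''). (a, b', b'')) (D b)) (D x)))) \<and>
     lin_fun sc eps \<and> (\<forall>x y. eps (x * y) = eps x * eps y) \<and> eps 1 = 1 \<and>
     (\<forall>x. (\<Sum>(a,b)\<leftarrow>D x. sc (eps a) b) = x \<and> (\<Sum>(a,b)\<leftarrow>D x. sc (eps b) a) = x) \<and>
     lin_map sc S \<and>
     (\<forall>x. (\<Sum>(a,b)\<leftarrow>D x. S a * b) = sc (eps x) 1 \<and> (\<Sum>(a,b)\<leftarrow>D x. a * S b) = sc (eps x) 1) \<and>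
     bij S"

definition VP :: "('k::field \<Rightarrow> 'h::ring_1 \<Rightarrow> 'h) \<Rightarrow> ('h \<Rightarrow> ('h \<times> 'h) list) \<Rightarrow> 'h \<Rightarrow> 'h set" where
  "VP sc D P = {(\<Sum>(a,b)\<leftarrow>D P. sc (\<nu> a) b) | \<nu>. lin_fun sc \<nu>}"

definition PV :: "('k::field \<Rightarrow> 'h::ring_1 \<Rightarrow> 'h) \<Rightarrow> ('h \<Rightarrow> ('h \<times> 'h) list) \<Rightarrow> 'h \<Rightarrow> 'h set" where
  "PV sc D P = {(\<Sum>(a,b)\<leftarrow>D P. sc (\<nu> b) a) | \<nu>. lin_fun sc \<nu>}"

definition right_group_like_proj ::
  "('k::field \<Rightarrow> 'h::ring_1 \<Rightarrow> 'h) \<Rightarrow> ('h \<Rightarrow> ('h \<times> 'h) list) \<Rightarrow> 'h \<Rightarrow> bool" where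
  "right_group_like_proj sc D P \<longleftrightarrow> P \<noteq> 0 \<and> P * P = P \<and>
     tens_eq sc (map (\<lambda>(a,b). (a, b * P)) (D P)) [(P,P)] \<and>
     tens_eq sc (map (\<lambda>(a,b). (a, P * b)) (D P)) [(P,P)]"

definition frobenius :: "('k::field \<Rightarrow> 'h::ring_1 \<Rightarrow> 'h) \<Rightarrow> 'h set \<Rightarrow> bool" where
  "frobenius sc V \<longleftrightarrow>
     0 \<in> V \<and> (\<forall>x\<in>V. \<forall>y\<in>V. \<forall>c. sc c x + y \<in> V \<and> x * y \<in> V) \<and>
     (\<exists>B. finite B \<and> B \<subseteq> V \<and> V = Modules.module.span sc B) \<and>
     (\<exists>e\<in>V. \<forall>a\<in>V. e * a = a \<and> a * e = a) \<and>
     (\<exists>\<sigma> :: 'h \<Rightarrow> 'h \<Rightarrow> 'k.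
        (\<forall>a\<in>V. \<forall>b\<in>V. \<forall>d\<in>V. \<forall>c.
            \<sigma> (sc c a + b) d = c * \<sigma> a d + \<sigma> b d \<and>
            \<sigma> d (sc c a + b) = c * \<sigma> d a + \<sigma> d b \<and>
            \<sigma> (a * b) d = \<sigma> a (b * d)) \<and>
        (\<forall>a\<in>V. (\<forall>b\<in>V. \<sigma> a b = 0) \<longrightarrow> a = 0) \<and>
        (\<forall>b\<in>V. (\<forall>a\<in>V. \<sigma> a b = 0) \<longrightarrow> b = 0))"

definition alg_unit :: "'h::ring_1 set \<Rightarrow> 'h" where
  "alg_unit V = (THE e. e \<in> V \<and> (\<forall>a\<in>V. e * a = a \<and> a * e = a))"

definition invertible_in :: "'h::ring_1 set \<Rightarrow> 'h \<Rightarrow> bool" where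
  "invertible_in V z \<longleftrightarrow> z \<in> V \<and> (\<exists>w\<in>V. z * w = alg_unit V \<and> w * z = alg_unit V)"

definition cyclic_elem ::
  "('k::field \<Rightarrow> 'h::ring_1 \<Rightarrow> 'h) \<Rightarrow> ('h \<Rightarrow> ('h \<times> 'h) list) \<Rightarrow> ('h \<Rightarrow> 'h) \<Rightarrow> 'h \<Rightarrow> 'h \<Rightarrow> bool" where
  "cyclic_elem sc D S P y \<longleftrightarrow> y \<in> PV sc D P \<and> (\<lambda>a. S a * y) ` VP sc D P = PV sc D P"

definition iota ::
  "('k::field \<Rightarrow> 'h::ring_1 \<Rightarrow> 'h) \<Rightarrow> ('h \<Rightarrow> ('h \<times> 'h) list) \<Rightarrow> ('h \<Rightarrow> 'h) \<Rightarrow> 'h \<Rightarrow> 'h \<Rightarrow> 'h \<Rightarrow> 'h" where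
  "iota sc D S P y x = inv_into (VP sc D P) (\<lambda>a. S a * y) x"

text \<open>z_y = P_(2) iota_y(P_(1)); computed via any linear extension of iota_y to H
  (the result only depends on iota_y restricted to _P V, which contains the left legs).\<close>
definition zy ::
  "('k::field \<Rightarrow> 'h::ring_1 \<Rightarrow> 'h) \<Rightarrow> ('h \<Rightarrow> ('h \<times> 'h) list) \<Rightarrow> ('h \<Rightarrow> 'h) \<Rightarrow> 'h \<Rightarrow> 'h \<Rightarrow> 'h" where
  "zy sc D S P y =
     (let f = (SOME f. lin_map sc f \<and> (\<forall>x\<in>PV sc D P. f x = iota sc D S P y x))
      in (\<Sum>(a,b)\<leftarrow>D P. b * f a))"

definition right_module ::
  "'h::ring_1 set \<Rightarrow> 'h \<Rightarrow> 'm::ab_group_add set \<Rightarrow> ('m \<Rightarrow> 'h \<Rightarrow> 'm) \<Rightarrow> bool" where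
  "right_module V e M act \<longleftrightarrow>
     0 \<in> M \<and> (\<forall>x\<in>M. \<forall>y\<in>M. x + y \<in> M) \<and> (\<forall>x\<in>M. - x \<in> M) \<and>
     (\<forall>x\<in>M. \<forall>a\<in>V. act x a \<in> M) \<and>
     (\<forall>x\<in>M. \<forall>y\<in>M. \<forall>a\<in>V. act (x + y) a = act x a + act y a) \<and>
     (\<forall>x\<in>M. \<forall>a\<in>V. \<forall>b\<in>V. act x (a + b) = act x a + act x b) \<and>
     (\<forall>x\<in>M. \<forall>a\<in>V. \<forall>b\<in>V. act x (a * b) = act (act x a) b) \<and>
     (\<forall>x\<in>M. act x e = x)"

definition submodule ::
  "'h::ring_1 set \<Rightarrow> 'm::ab_group_add set \<Rightarrow> ('m \<Rightarrow> 'h \<Rightarrow> 'm) \<Rightarrow> 'm set \<Rightarrow> bool" where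
  "submodule V M act N \<longleftrightarrow> N \<subseteq> M \<and> 0 \<in> N \<and> (\<forall>x\<in>N. \<forall>y\<in>N. x + y \<in> N) \<and>
     (\<forall>x\<in>N. - x \<in> N) \<and> (\<forall>x\<in>N. \<forall>a\<in>V. act x a \<in> N)"

definition completely_reducible ::
  "'h::ring_1 set \<Rightarrow> 'm::ab_group_add set \<Rightarrow> ('m \<Rightarrow> 'h \<Rightarrow> 'm) \<Rightarrow> bool" where
  "completely_reducible V M act \<longleftrightarrow>
     (\<forall>N. submodule V M act N \<longrightarrow>
        (\<exists>N'. submodule V M act N' \<and> N \<inter> N' = {0} \<and> {x + y | x y. x \<in> N \<and> y \<in> N'} = M))"

definition semisimple_alg :: "'h::ring_1 set \<Rightarrow> bool" where
  "semisimple_alg V \<longleftrightarrow> completely_reducible V V (\<lambda>x a. x * a)"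

end

theory Submission
  imports Defs
begin

definition lin_t :: "('k::field \<Rightarrow> 'a::ab_group_add \<Rightarrow> 'a) \<Rightarrow> ('k \<Rightarrow> 'b::ab_group_add \<Rightarrow> 'b) \<Rightarrow> ('a \<Rightarrow> 'b) \<Rightarrow> bool" where
  "lin_t s1 s2 f \<longleftrightarrow> (\<forall>c x y. f (s1 c x + y) = s2 c (f x) + f y)"

lemma vs_field: "vector_space ((*) :: 'k::field \<Rightarrow> 'k \<Rightarrow> 'k)"
  by unfold_locales (auto simp: algebra_simps)

lemma lin_fun_t: "lin_fun sc f = lin_t sc (*) f"
  by (simp add: lin_fun_def lin_t_def)
lemma lin_map_t: "lin_map sc f = lin_t sc sc f"
  by (simp add: lin_map_def lin_t_def)

locale two_vs = s1: vector_space s1 + s2: vector_space s2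
  for s1 :: "'k::field \<Rightarrow> 'a::ring_1 \<Rightarrow> 'a" and s2 :: "'k \<Rightarrow> 'b::ab_group_add \<Rightarrow> 'b"
begin

lemma lin_t_add: "lin_t s1 s2 f \<Longrightarrow> f (x + y) = f x + f y"
  unfolding lin_t_def by (drule spec[of _ 1]) simp
lemma lin_t_zero: "lin_t s1 s2 f \<Longrightarrow> f 0 = 0"
  using lin_t_add[of f 0 0] by simp
lemma lin_t_scale: "lin_t s1 s2 f \<Longrightarrow> f (s1 c x) = s2 c (f x)"
  using lin_t_zero[of f] unfolding lin_t_def by (metis add_0_right)
lemma lin_t_neg: "lin_t s1 s2 f \<Longrightarrow> f (- x) = - f x"
  using lin_t_add[of f x "- x"] lin_t_zero[of f] by (simp add: add.commute eq_neg_iff_add_eq_0)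
lemma lin_t_diff: "lin_t s1 s2 f \<Longrightarrow> f (x - y) = f x - f y"
  using lin_t_add[of f x "- y"] lin_t_neg[of f y] by simp
lemma lin_t_sum: "lin_t s1 s2 f \<Longrightarrow> f (sum g A) = (\<Sum>i\<in>A. f (g i))"
  by (induction A rule: infinite_finite_induct) (auto simp: lin_t_add[of f] lin_t_zero[of f])
lemma lin_t_sum_list: "lin_t s1 s2 f \<Longrightarrow> f (sum_list (map g xs)) = sum_list (map (\<lambda>i. f (g i)) xs)"
  by (induction xs) (auto simp: lin_t_add[of f] lin_t_zero[of f])

lemma lin_t_linear: "lin_t s1 s2 f \<Longrightarrow> Vector_Spaces.linear s1 s2 f"
  unfolding Vector_Spaces.linear_iff using lin_t_add lin_t_scale
  by (auto intro: s1.vector_space_axioms s2.vector_space_axioms)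

lemma linear_lin_t: "Vector_Spaces.linear s1 s2 f \<Longrightarrow> lin_t s1 s2 f"
  unfolding lin_t_def Vector_Spaces.linear_iff by auto

lemma lin_t_add_fun: "lin_t s1 s2 f \<Longrightarrow> lin_t s1 s2 g \<Longrightarrow> lin_t s1 s2 (\<lambda>x. f x + g x)"
  unfolding lin_t_def by (simp add: s2.scale_right_distrib algebra_simps)

lemma lin_t_zero_fun: "lin_t s1 s2 (\<lambda>x. 0)"
  unfolding lin_t_def by simp

lemma lin_t_sum_list_fun: "(\<And>i. i \<in> set xs \<Longrightarrow> lin_t s1 s2 (g i)) \<Longrightarrow> lin_t s1 s2 (\<lambda>x. sum_list (map (\<lambda>i. g i x) xs))"
  by (induction xs) (auto intro: lin_t_add_fun lin_t_zero_fun)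

lemma lin_t_sum_fun: "(\<And>i. i \<in> A \<Longrightarrow> lin_t s1 s2 (g i)) \<Longrightarrow> lin_t s1 s2 (\<lambda>x. \<Sum>i\<in>A. g i x)"
  by (induction A rule: infinite_finite_induct) (auto intro: lin_t_add_fun lin_t_zero_fun)


end

lemma sum_list_swap:
  fixes f :: "'a \<Rightarrow> 'b \<Rightarrow> 'c::comm_monoid_add"
  shows "sum_list (map (\<lambda>x. sum_list (map (f x) ys)) xs) = sum_list (map (\<lambda>y. sum_list (map (\<lambda>x. f x y) xs)) ys)"
proof (induction xs)
  case (Cons a xs)
  have "(\<Sum>y\<leftarrow>ys. f a y + (\<Sum>x\<leftarrow>xs. f x y)) = (\<Sum>y\<leftarrow>ys. f a y) + (\<Sum>y\<leftarrow>ys. (\<Sum>x\<leftarrow>xs. f x y))"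
    by (rule sum_list_addf)
  then show ?case using Cons.IH by (simp del: sum_list_addf)
qed simp

lemma sum_list_sum_swap:
  fixes f :: "'a \<Rightarrow> 'b \<Rightarrow> 'c::comm_monoid_add"
  shows "sum_list (map (\<lambda>x. \<Sum>y\<in>A. f x y) xs) = (\<Sum>y\<in>A. sum_list (map (\<lambda>x. f x y) xs))"
  by (induction xs) (auto simp: sum.distrib)


lemma two_vs_field_gen: "vector_space s1 \<Longrightarrow> two_vs s1 ((*) :: 'k::field \<Rightarrow> 'k \<Rightarrow> 'k)"
  unfolding two_vs_def using vs_field by (intro conjI)

context two_vs begin
lemma two_vs_field: "two_vs s1 ((*) :: 'k \<Rightarrow> 'k \<Rightarrow> 'k)"
  using two_vs_field_gen s1.vector_space_axioms by blast
end

context two_vs begin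

lemma dual_exists:
  assumes "finite X"
  obtains C \<psi> where "finite C" "\<And>g. lin_t s1 (*) (\<psi> g)" "\<And>x. x \<in> X \<Longrightarrow> x = (\<Sum>g\<in>C. s1 (\<psi> g x) g)"
proof -
  obtain B where B: "B \<subseteq> X" "s1.independent B" "X \<subseteq> s1.span B"
    using s1.maximal_independent_subset by blast
  have fB: "finite B" using B(1) assms finite_subset by blast
  define BB where "BB = s1.extend_basis B"
  have BB: "s1.independent BB" "s1.span BB = UNIV" "B \<subseteq> BB"
    using B(2) by (auto simp: BB_def s1.independent_extend_basis s1.extend_basis_superset)
  define \<psi> where "\<psi> g x = s1.representation BB x g" for g x
  have lin: "lin_t s1 (*) (\<psi> g)" for g
    unfolding lin_t_def \<psi>_def
    using BB by (simp add: s1.representation_add s1.representation_scale)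
  have rep: "x = (\<Sum>g\<in>B. s1 (\<psi> g x) g)" if "x \<in> X" for x
  proof -
    have "x \<in> s1.span B" using that B by auto
    then have "s1.representation BB x = s1.representation B x"
      using s1.representation_extend[OF BB(1) _ BB(3)] by blast
    then show ?thesis unfolding \<psi>_def
      using s1.sum_representation_eq[OF B(2) \<open>x \<in> s1.span B\<close> fB] by simp
  qed
  show ?thesis using that[OF fB lin rep] .
qed

lemma separate:
  assumes "x \<noteq> 0" obtains \<phi> where "lin_t s1 (*) \<phi>" "\<phi> x \<noteq> 0"
proof -
  obtain C \<psi> where C: "finite C" "\<And>g. lin_t s1 (*) (\<psi> g)" "x = (\<Sum>g\<in>C. s1 (\<psi> g x) g)"
    using dual_exists[of "{x}"] by auto
  have "\<exists>g. \<psi> g x \<noteq> 0"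
  proof (rule ccontr)
    assume "\<not> ?thesis"
    then have "x = 0" using C(3) by simp
    then show False using assms by simp
  qed
  then show ?thesis using that C(2) by blast
qed

lemma sep_eq:
  assumes "\<And>\<phi>. lin_t s1 (*) \<phi> \<Longrightarrow> \<phi> x = \<phi> y" shows "x = y"
proof (rule ccontr)
  assume "x \<noteq> y"
  then have "x - y \<noteq> 0" by simp
  then obtain \<phi> where "lin_t s1 (*) \<phi>" "\<phi> (x - y) \<noteq> 0" by (rule separate)
  moreover have "\<phi> (x - y) = \<phi> x - \<phi> y" by (rule two_vs.lin_t_diff[OF two_vs_field]) fact
  ultimately show False using assms[of \<phi>] by simp
qed


lemma lin_t_sum_pairs:
  assumes "lin_t s1 s2 f"
  shows "f (\<Sum>(a,b)\<leftarrow>s. s1 (h a b) (k a b)) = (\<Sum>(a,b)\<leftarrow>s. s2 (h a b) (f (k a b)))"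
  by (induction s) (auto simp: lin_t_add[OF assms] lin_t_zero[OF assms] lin_t_scale[OF assms])

lemma expand2:
  assumes C: "finite C" and \<psi>: "\<And>g. lin_t s1 (*) (\<psi> g)"
    and rep: "\<And>a b. (a,b) \<in> set s \<Longrightarrow> b = (\<Sum>g\<in>C. s1 (\<psi> g b) g)"
    and F1: "\<And>b. lin_t s1 s2 (\<lambda>a. F a b)" and F2: "\<And>a. lin_t s1 s2 (F a)"
  shows "(\<Sum>(a,b)\<leftarrow>s. F a b) = (\<Sum>g\<in>C. F (\<Sum>(a,b)\<leftarrow>s. s1 (\<psi> g b) a) g)"
  using rep
proof (induction s)
  case Nil
  then show ?case using lin_t_zero[OF F1] by simp
next
  case (Cons p s)
  obtain a b where p: "p = (a,b)" by fastforce
  have IH: "(\<Sum>(a,b)\<leftarrow>s. F a b) = (\<Sum>g\<in>C. F (\<Sum>(a,b)\<leftarrow>s. s1 (\<psi> g b) a) g)"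
    using Cons by auto
  have bb: "b = (\<Sum>g\<in>C. s1 (\<psi> g b) g)" using Cons.prems p by auto
  have "F a b = F a (\<Sum>g\<in>C. s1 (\<psi> g b) g)" using bb by simp
  also have "\<dots> = (\<Sum>g\<in>C. F a (s1 (\<psi> g b) g))" by (rule lin_t_sum[OF F2])
  also have "\<dots> = (\<Sum>g\<in>C. F (s1 (\<psi> g b) a) g)"
    by (rule sum.cong) (auto simp: lin_t_scale[OF F2] lin_t_scale[OF F1])
  finally have 1: "F a b = (\<Sum>g\<in>C. F (s1 (\<psi> g b) a) g)" .
  have "(\<Sum>(a,b)\<leftarrow>p#s. F a b) = F a b + (\<Sum>(a,b)\<leftarrow>s. F a b)" using p by simp
  also have "\<dots> = (\<Sum>g\<in>C. F (s1 (\<psi> g b) a) g + F (\<Sum>(a,b)\<leftarrow>s. s1 (\<psi> g b) a) g)"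
    unfolding 1 IH by (simp add: sum.distrib)
  also have "\<dots> = (\<Sum>g\<in>C. F (\<Sum>(a,b)\<leftarrow>p#s. s1 (\<psi> g b) a) g)"
    by (rule sum.cong) (auto simp: p lin_t_add[OF F1])
  finally show ?case .
qed

lemma expand1:
  assumes C: "finite C" and \<psi>: "\<And>g. lin_t s1 (*) (\<psi> g)"
    and rep: "\<And>a b. (a,b) \<in> set s \<Longrightarrow> a = (\<Sum>g\<in>C. s1 (\<psi> g a) g)"
    and F1: "\<And>b. lin_t s1 s2 (\<lambda>a. F a b)" and F2: "\<And>a. lin_t s1 s2 (F a)"
  shows "(\<Sum>(a,b)\<leftarrow>s. F a b) = (\<Sum>g\<in>C. F g (\<Sum>(a,b)\<leftarrow>s. s1 (\<psi> g a) b))"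
  using rep
proof (induction s)
  case Nil
  then show ?case using lin_t_zero[OF F2] by simp
next
  case (Cons p s)
  obtain a b where p: "p = (a,b)" by fastforce
  have IH: "(\<Sum>(a,b)\<leftarrow>s. F a b) = (\<Sum>g\<in>C. F g (\<Sum>(a,b)\<leftarrow>s. s1 (\<psi> g a) b))"
    using Cons by auto
  have aa: "a = (\<Sum>g\<in>C. s1 (\<psi> g a) g)" using Cons.prems p by auto
  have "F a b = F (\<Sum>g\<in>C. s1 (\<psi> g a) g) b" using aa by simp
  also have "\<dots> = (\<Sum>g\<in>C. F (s1 (\<psi> g a) g) b)" by (rule lin_t_sum[OF F1])
  also have "\<dots> = (\<Sum>g\<in>C. F g (s1 (\<psi> g a) b))"
    by (rule sum.cong) (auto simp: lin_t_scale[OF F2] lin_t_scale[OF F1])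
  finally have 1: "F a b = (\<Sum>g\<in>C. F g (s1 (\<psi> g a) b))" .
  have "(\<Sum>(a,b)\<leftarrow>p#s. F a b) = F a b + (\<Sum>(a,b)\<leftarrow>s. F a b)" using p by simp
  also have "\<dots> = (\<Sum>g\<in>C. F g (s1 (\<psi> g a) b) + F g (\<Sum>(a,b)\<leftarrow>s. s1 (\<psi> g a) b))"
    unfolding 1 IH by (simp add: sum.distrib)
  also have "\<dots> = (\<Sum>g\<in>C. F g (\<Sum>(a,b)\<leftarrow>p#s. s1 (\<psi> g a) b))"
    by (rule sum.cong) (auto simp: p lin_t_add[OF F2])
  finally show ?case .
qed

lemma transfer2:
  assumes te: "tens_eq s1 s t"
    and F1: "\<And>b. lin_t s1 s2 (\<lambda>a. F a b)" and F2: "\<And>a. lin_t s1 s2 (F a)"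
  shows "(\<Sum>(a,b)\<leftarrow>s. F a b) = (\<Sum>(a,b)\<leftarrow>t. F a b)"
proof -
  obtain C \<psi> where C: "finite C" "\<And>g. lin_t s1 (*) (\<psi> g)"
    "\<And>x. x \<in> set (map snd s) \<union> set (map snd t) \<Longrightarrow> x = (\<Sum>g\<in>C. s1 (\<psi> g x) g)"
    using dual_exists[of "set (map snd s) \<union> set (map snd t)"] by blast
  have rs: "b = (\<Sum>g\<in>C. s1 (\<psi> g b) g)" if "(a,b) \<in> set s" for a b
    by (rule C(3)) (use that in \<open>auto intro!: image_eqI[where x="(a,b)"]\<close>)
  have rt: "b = (\<Sum>g\<in>C. s1 (\<psi> g b) g)" if "(a,b) \<in> set t" for a b
    by (rule C(3)) (use that in \<open>auto intro!: image_eqI[where x="(a,b)"]\<close>)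
  have eq: "(\<Sum>(a,b)\<leftarrow>s. s1 (\<psi> g b) a) = (\<Sum>(a,b)\<leftarrow>t. s1 (\<psi> g b) a)" for g
  proof (rule sep_eq)
    fix \<phi> assume \<phi>: "lin_t s1 (*) \<phi>"
    have "\<phi> (\<Sum>(a,b)\<leftarrow>s. s1 (\<psi> g b) a) = (\<Sum>(a,b)\<leftarrow>s. \<psi> g b * \<phi> a)"
      by (rule two_vs.lin_t_sum_pairs[OF two_vs_field \<phi>])
    also have "\<dots> = (\<Sum>(a,b)\<leftarrow>s. \<phi> a * \<psi> g b)" by (simp add: mult.commute)
    also have "\<dots> = (\<Sum>(a,b)\<leftarrow>t. \<phi> a * \<psi> g b)"
      using te \<phi> C(2)[of g] unfolding tens_eq_def lin_fun_t by (elim allE[of _ \<phi>] allE[of _ "\<psi> g"]) simp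
    also have "\<dots> = (\<Sum>(a,b)\<leftarrow>t. \<psi> g b * \<phi> a)" by (simp add: mult.commute)
    also have "\<dots> = \<phi> (\<Sum>(a,b)\<leftarrow>t. s1 (\<psi> g b) a)"
      by (rule two_vs.lin_t_sum_pairs[OF two_vs_field \<phi>, symmetric])
    finally show "\<phi> (\<Sum>(a,b)\<leftarrow>s. s1 (\<psi> g b) a) = \<phi> (\<Sum>(a,b)\<leftarrow>t. s1 (\<psi> g b) a)" .
  qed
  have e1: "(\<Sum>(a,b)\<leftarrow>s. F a b) = (\<Sum>g\<in>C. F (\<Sum>(a,b)\<leftarrow>s. s1 (\<psi> g b) a) g)"
    by (rule expand2[OF C(1,2) rs F1 F2])
  have e2: "(\<Sum>(a,b)\<leftarrow>t. F a b) = (\<Sum>g\<in>C. F (\<Sum>(a,b)\<leftarrow>t. s1 (\<psi> g b) a) g)"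
    by (rule expand2[OF C(1,2) rt F1 F2])
  show ?thesis unfolding e1 e2 eq ..
qed

lemma expand3:
  assumes C: "finite C"
    and rep: "\<And>a b c. (a,b,c) \<in> set s \<Longrightarrow> c = (\<Sum>g\<in>C. s1 (\<chi> g c) g)"
    and F1: "\<And>b c. lin_t s1 s2 (\<lambda>a. F a b c)" and F3: "\<And>a b. lin_t s1 s2 (F a b)"
  shows "(\<Sum>(a,b,c)\<leftarrow>s. F a b c) = (\<Sum>g\<in>C. (\<Sum>(a,b,c)\<leftarrow>s. F (s1 (\<chi> g c) a) b g))"
  using rep
proof (induction s)
  case (Cons p s)
  obtain a b c where p: "p = (a,b,c)" by (cases p) auto
  have IH: "(\<Sum>(a,b,c)\<leftarrow>s. F a b c) = (\<Sum>g\<in>C. (\<Sum>(a,b,c)\<leftarrow>s. F (s1 (\<chi> g c) a) b g))"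
    using Cons by auto
  have cc: "c = (\<Sum>g\<in>C. s1 (\<chi> g c) g)" using Cons.prems p by auto
  have "F a b c = F a b (\<Sum>g\<in>C. s1 (\<chi> g c) g)" using cc by simp
  also have "\<dots> = (\<Sum>g\<in>C. F a b (s1 (\<chi> g c) g))" by (rule lin_t_sum[OF F3])
  also have "\<dots> = (\<Sum>g\<in>C. F (s1 (\<chi> g c) a) b g)"
    by (rule sum.cong) (auto simp: lin_t_scale[OF F3] lin_t_scale[OF F1])
  finally have 1: "F a b c = (\<Sum>g\<in>C. F (s1 (\<chi> g c) a) b g)" .
  show ?case using p 1 IH by (simp add: sum.distrib)
qed simp

lemma transfer3:
  assumes te: "tens3_eq s1 s t"
    and F1: "\<And>b c. lin_t s1 s2 (\<lambda>a. F a b c)" and F2: "\<And>a c. lin_t s1 s2 (\<lambda>b. F a b c)"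
    and F3: "\<And>a b. lin_t s1 s2 (F a b)"
  shows "(\<Sum>(a,b,c)\<leftarrow>s. F a b c) = (\<Sum>(a,b,c)\<leftarrow>t. F a b c)"
proof -
  let ?X = "set (map (snd o snd) s) \<union> set (map (snd o snd) t)"
  obtain C \<chi> where C: "finite C" "\<And>g. lin_t s1 (*) (\<chi> g)"
    "\<And>x. x \<in> ?X \<Longrightarrow> x = (\<Sum>g\<in>C. s1 (\<chi> g x) g)"
    using dual_exists[of ?X] by blast
  have rs: "c = (\<Sum>g\<in>C. s1 (\<chi> g c) g)" if "(a,b,c) \<in> set s" for a b c
    by (rule C(3)) (use that in \<open>auto intro!: image_eqI[where x="(a,b,c)"]\<close>)
  have rt: "c = (\<Sum>g\<in>C. s1 (\<chi> g c) g)" if "(a,b,c) \<in> set t" for a b c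
    by (rule C(3)) (use that in \<open>auto intro!: image_eqI[where x="(a,b,c)"]\<close>)
  have conv: "(\<Sum>(a,b,c)\<leftarrow>u. G a b c) = (\<Sum>(a,b)\<leftarrow>map (\<lambda>(a,b,c). (s1 (\<chi> g c) a, b)) u. F a b g)"
    if "\<And>a b c. G a b c = F (s1 (\<chi> g c) a) b g" for u G g
    using that by (induction u) auto
  have eq: "(\<Sum>(a,b,c)\<leftarrow>s. F (s1 (\<chi> g c) a) b g) = (\<Sum>(a,b,c)\<leftarrow>t. F (s1 (\<chi> g c) a) b g)" for g
  proof -
    have te2: "tens_eq s1 (map (\<lambda>(a,b,c). (s1 (\<chi> g c) a, b)) s) (map (\<lambda>(a,b,c). (s1 (\<chi> g c) a, b)) t)"
      unfolding tens_eq_def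
    proof (intro allI impI)
      fix \<phi> \<psi> assume l: "lin_fun s1 \<phi> \<and> lin_fun s1 \<psi>"
      then have l': "lin_t s1 (*) \<phi>" by (simp add: lin_fun_t)
      have h: "(\<Sum>(a,b)\<leftarrow>map (\<lambda>(a,b,c). (s1 (\<chi> g c) a, b)) u. \<phi> a * \<psi> b) = (\<Sum>(a,b,c)\<leftarrow>u. \<phi> a * \<psi> b * \<chi> g c)" for u
        by (induction u) (auto simp: two_vs.lin_t_scale[OF two_vs_field l'] mult.commute mult.left_commute)
      show "(\<Sum>(a,b)\<leftarrow>map (\<lambda>(a,b,c). (s1 (\<chi> g c) a, b)) s. \<phi> a * \<psi> b) = (\<Sum>(a,b)\<leftarrow>map (\<lambda>(a,b,c). (s1 (\<chi> g c) a, b)) t. \<phi> a * \<psi> b)"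
        unfolding h using te l C(2)[of g] unfolding tens3_eq_def lin_fun_t by blast
    qed
    have c1: "(\<Sum>(a,b,c)\<leftarrow>s. F (s1 (\<chi> g c) a) b g) = (\<Sum>(a,b)\<leftarrow>map (\<lambda>(a,b,c). (s1 (\<chi> g c) a, b)) s. F a b g)"
      by (rule conv) simp
    have c2: "(\<Sum>(a,b,c)\<leftarrow>t. F (s1 (\<chi> g c) a) b g) = (\<Sum>(a,b)\<leftarrow>map (\<lambda>(a,b,c). (s1 (\<chi> g c) a, b)) t. F a b g)"
      by (rule conv) simp
    show ?thesis unfolding c1 c2
      by (rule transfer2[OF te2]) (auto intro: F1 F2)
  qed
  have e1: "(\<Sum>(a,b,c)\<leftarrow>s. F a b c) = (\<Sum>g\<in>C. (\<Sum>(a,b,c)\<leftarrow>s. F (s1 (\<chi> g c) a) b g))"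
    by (rule expand3[OF C(1) rs F1 F3])
  have e2: "(\<Sum>(a,b,c)\<leftarrow>t. F a b c) = (\<Sum>g\<in>C. (\<Sum>(a,b,c)\<leftarrow>t. F (s1 (\<chi> g c) a) b g))"
    by (rule expand3[OF C(1) rt F1 F3])
  show ?thesis unfolding e1 e2 eq ..
qed

end


lemma sum_list_mult_right_pairs:
  fixes k :: "'a::ring"
  shows "(\<Sum>(a,b)\<leftarrow>xs. F a b) * k = (\<Sum>(a,b)\<leftarrow>xs. F a b * k)"
  by (induction xs) (auto simp: distrib_right)
lemma sum_list_mult_left_pairs:
  fixes k :: "'a::ring"
  shows "k * (\<Sum>(a,b)\<leftarrow>xs. F a b) = (\<Sum>(a,b)\<leftarrow>xs. k * F a b)"
  by (induction xs) (auto simp: distrib_left)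
lemma sum_list_swap_pairs:
  fixes F :: "'a \<Rightarrow> 'b \<Rightarrow> 'c \<Rightarrow> 'd \<Rightarrow> 'e::comm_monoid_add"
  shows "(\<Sum>(a,b)\<leftarrow>xs. \<Sum>(c,d)\<leftarrow>ys. F a b c d) = (\<Sum>(c,d)\<leftarrow>ys. \<Sum>(a,b)\<leftarrow>xs. F a b c d)"
  using sum_list_swap[of "\<lambda>p q. case p of (a,b) \<Rightarrow> case q of (c,d) \<Rightarrow> F a b c d" ys xs]
  by (simp add: split_def)

locale hctx =
  fixes sc :: "'k::field \<Rightarrow> 'h::ring_1 \<Rightarrow> 'h" and D :: "'h \<Rightarrow> ('h \<times> 'h) list"
    and eps :: "'h \<Rightarrow> 'k" and S :: "'h \<Rightarrow> 'h"
  assumes hopf: "hopf_algebra sc D eps S"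
begin

lemma vs: "vector_space sc" using hopf by (simp add: hopf_algebra_def)
lemma sc_mult_left: "sc c x * y = sc c (x*y)" using hopf by (simp add: hopf_algebra_def)
lemma sc_mult_right: "x * sc c y = sc c (x*y)" using hopf unfolding hopf_algebra_def by metis
lemma D_lin: "tens_eq sc (D (sc c x + y)) (map (\<lambda>(a,b). (sc c a, b)) (D x) @ D y)"
  using hopf by (simp add: hopf_algebra_def)
lemma D_mul: "tens_eq sc (D (x * y)) (concat (map (\<lambda>(a,b). map (\<lambda>(a',b'). (a * a', b * b')) (D y)) (D x)))"
  using hopf by (simp add: hopf_algebra_def)
lemma D_one: "tens_eq sc (D 1) [(1,1)]"
  using hopf by (simp add: hopf_algebra_def)
lemma D_coass: "tens3_eq sc
        (concat (map (\<lambda>(a,b). map (\<lambda>(a',b'). (a', b', b)) (D a)) (D x)))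
        (concat (map (\<lambda>(a,b). map (\<lambda>(b',b''). (a, b', b'')) (D b)) (D x)))"
  using hopf by (simp add: hopf_algebra_def)
lemma eps_lin: "lin_t sc (*) eps" using hopf by (simp add: hopf_algebra_def lin_fun_t)
lemma eps_mult: "eps (x * y) = eps x * eps y" using hopf by (simp add: hopf_algebra_def)
lemma eps_one: "eps 1 = 1" using hopf by (simp add: hopf_algebra_def)
lemma counit1: "(\<Sum>(a,b)\<leftarrow>D x. sc (eps a) b) = x" using hopf by (simp add: hopf_algebra_def)
lemma counit2: "(\<Sum>(a,b)\<leftarrow>D x. sc (eps b) a) = x" using hopf by (simp add: hopf_algebra_def)
lemma S_lin: "lin_t sc sc S" using hopf by (simp add: hopf_algebra_def lin_map_t)
lemma antip1: "(\<Sum>(a,b)\<leftarrow>D x. S a * b) = sc (eps x) 1" using hopf by (simp add: hopf_algebra_def)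
lemma antip2: "(\<Sum>(a,b)\<leftarrow>D x. a * S b) = sc (eps x) 1" using hopf by (simp add: hopf_algebra_def)
lemma S_bij: "bij S" using hopf by (simp add: hopf_algebra_def)

end

sublocale hctx \<subseteq> HV: two_vs sc sc using vs by (simp add: two_vs_def)
sublocale hctx \<subseteq> HK: two_vs sc "(*)" using vs vs_field by (simp add: two_vs_def)

locale hctx2 = hctx sc D eps S + two_vs sc s2
  for sc :: "'k::field \<Rightarrow> 'h::ring_1 \<Rightarrow> 'h" and D eps S and s2 :: "'k \<Rightarrow> 'b::ab_group_add \<Rightarrow> 'b"
begin

lemma s2_sum_list_pairs: "s2 c (\<Sum>(a,b)\<leftarrow>xs. F a b) = (\<Sum>(a,b)\<leftarrow>xs. s2 c (F a b))"
  by (induction xs) (auto simp: s2.scale_right_distrib)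

lemma lin_t_ds_arg:
  assumes "\<And>c d. lin_t sc s2 (\<lambda>x. H x c d)"
  shows "lin_t sc s2 (\<lambda>x. \<Sum>(c,d)\<leftarrow>xs. H x c d)"
  by (induction xs) (auto intro: lin_t_add_fun lin_t_zero_fun assms)

lemma ds_lin_gen:
  assumes F1: "\<And>b. lin_t sc s2 (\<lambda>a. F a b)" and F2: "\<And>a. lin_t sc s2 (F a)"
  shows "(\<Sum>(a,b)\<leftarrow>D (sc c x + y). F a b) = s2 c (\<Sum>(a,b)\<leftarrow>D x. F a b) + (\<Sum>(a,b)\<leftarrow>D y. F a b)"
proof -
  have "(\<Sum>(a,b)\<leftarrow>D (sc c x + y). F a b) = (\<Sum>(a,b)\<leftarrow>map (\<lambda>(a,b). (sc c a, b)) (D x) @ D y. F a b)"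
    by (rule transfer2[OF D_lin F1 F2])
  also have "\<dots> = (\<Sum>(a,b)\<leftarrow>D x. F (sc c a) b) + (\<Sum>(a,b)\<leftarrow>D y. F a b)"
    by (simp add: comp_def split_def)
  also have "(\<Sum>(a,b)\<leftarrow>D x. F (sc c a) b) = s2 c (\<Sum>(a,b)\<leftarrow>D x. F a b)"
    by (simp add: s2_sum_list_pairs lin_t_scale[OF F1])
  finally show ?thesis .
qed

lemma ds_lin:
  assumes F1: "\<And>b. lin_t sc s2 (\<lambda>a. F a b)" and F2: "\<And>a. lin_t sc s2 (F a)"
  shows "lin_t sc s2 (\<lambda>x. \<Sum>(a,b)\<leftarrow>D x. F a b)"
  unfolding lin_t_def using ds_lin_gen[OF F1 F2] by blast

lemma ds_lin_comp:
  assumes F1: "\<And>b. lin_t sc s2 (\<lambda>a. F a b)" and F2: "\<And>a. lin_t sc s2 (F a)"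
    and f: "lin_t sc sc f"
  shows "lin_t sc s2 (\<lambda>x. \<Sum>(a,b)\<leftarrow>D (f x). F a b)"
  using ds_lin_gen[OF F1 F2] f by (simp add: lin_t_def)

lemma ds_mul:
  assumes F1: "\<And>b. lin_t sc s2 (\<lambda>a. F a b)" and F2: "\<And>a. lin_t sc s2 (F a)"
  shows "(\<Sum>(a,b)\<leftarrow>D (x*y). F a b) = (\<Sum>(a,b)\<leftarrow>D x. \<Sum>(a',b')\<leftarrow>D y. F (a*a') (b*b'))"
proof -
  have "(\<Sum>(a,b)\<leftarrow>D (x*y). F a b) = (\<Sum>(a,b)\<leftarrow>concat (map (\<lambda>(a,b). map (\<lambda>(a',b'). (a * a', b * b')) (D y)) (D x)). F a b)"
    by (rule transfer2[OF D_mul F1 F2])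
  also have "\<dots> = (\<Sum>(a,b)\<leftarrow>D x. \<Sum>(a',b')\<leftarrow>D y. F (a*a') (b*b'))"
  proof -
    have "(\<Sum>(a,b)\<leftarrow>concat (map (\<lambda>(a,b). map (\<lambda>(a',b'). (a * a', b * b')) (D y)) xs). F a b)
       = (\<Sum>(a,b)\<leftarrow>xs. \<Sum>(a',b')\<leftarrow>D y. F (a*a') (b*b'))" for xs
      by (induction xs) (auto simp: comp_def split_def)
    then show ?thesis .
  qed
  finally show ?thesis .
qed

lemma ds_one:
  assumes F1: "\<And>b. lin_t sc s2 (\<lambda>a. F a b)" and F2: "\<And>a. lin_t sc s2 (F a)"
  shows "(\<Sum>(a,b)\<leftarrow>D 1. F a b) = F 1 1"
  using transfer2[OF D_one F1 F2] by simp

lemma ds_coass: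
  assumes G1: "\<And>b c. lin_t sc s2 (\<lambda>a. G a b c)" and G2: "\<And>a c. lin_t sc s2 (\<lambda>b. G a b c)"
    and G3: "\<And>a b. lin_t sc s2 (G a b)"
  shows "(\<Sum>(a,b)\<leftarrow>D x. \<Sum>(a',b')\<leftarrow>D a. G a' b' b) = (\<Sum>(a,b)\<leftarrow>D x. \<Sum>(b',b'')\<leftarrow>D b. G a b' b'')"
proof -
  have l: "(\<Sum>(a,b,c)\<leftarrow>concat (map (\<lambda>(a,b). map (\<lambda>(a',b'). (a', b', b)) (D a)) xs). G a b c)
     = (\<Sum>(a,b)\<leftarrow>xs. \<Sum>(a',b')\<leftarrow>D a. G a' b' b)" for xs
    by (induction xs) (auto simp: comp_def split_def)
  have r: "(\<Sum>(a,b,c)\<leftarrow>concat (map (\<lambda>(a,b). map (\<lambda>(b',b''). (a, b', b'')) (D b)) xs). G a b c)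
     = (\<Sum>(a,b)\<leftarrow>xs. \<Sum>(b',b'')\<leftarrow>D b. G a b' b'')" for xs
    by (induction xs) (auto simp: comp_def split_def)
  show ?thesis using transfer3[OF D_coass G1 G2 G3] unfolding l r .
qed

end

sublocale hctx \<subseteq> Hh: hctx2 sc D eps S sc by unfold_locales
sublocale hctx \<subseteq> Hk: hctx2 sc D eps S "(*)" by unfold_locales


context hctx begin

lemma sum_pairs_cong: "(\<And>a b. (a,b) \<in> set xs \<Longrightarrow> F a b = G a b) \<Longrightarrow> (\<Sum>(a,b)\<leftarrow>xs. F a b) = (\<Sum>(a,b)\<leftarrow>xs. G a b)"
  by (induction xs) auto

lemma lin_id: "lin_t sc sc (\<lambda>x. x)" unfolding lin_t_def by simp
lemma lin_mult_r: "lin_t sc sc f \<Longrightarrow> lin_t sc sc (\<lambda>x. f x * k)"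
  unfolding lin_t_def by (simp add: distrib_right sc_mult_left)
lemma lin_mult_l: "lin_t sc sc f \<Longrightarrow> lin_t sc sc (\<lambda>x. k * f x)"
  unfolding lin_t_def by (simp add: distrib_left sc_mult_right)
lemma lin_S: "lin_t sc sc f \<Longrightarrow> lin_t sc sc (\<lambda>x. S (f x))"
  using S_lin unfolding lin_t_def by simp
lemma lin_sc: "lin_t sc sc f \<Longrightarrow> lin_t sc sc (\<lambda>x. sc c (f x))"
  unfolding lin_t_def by (simp add: HV.s1.scale_right_distrib mult.commute)
lemma linK_comp: "lin_t sc (*) \<phi> \<Longrightarrow> lin_t sc sc f \<Longrightarrow> lin_t sc (*) (\<lambda>x. \<phi> (f x))"
  unfolding lin_t_def by simp
lemma linK_mult_r: "lin_t sc (*) g \<Longrightarrow> lin_t sc (*) (\<lambda>x. g x * (k::'k))"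
  unfolding lin_t_def by (metis distrib_right mult.assoc)
lemma linK_mult_l: "lin_t sc (*) g \<Longrightarrow> lin_t sc (*) (\<lambda>x. (k::'k) * g x)"
  unfolding lin_t_def by (metis distrib_left mult.left_commute)

lemmas lin_rules = lin_id lin_mult_r lin_mult_l lin_S lin_sc linK_mult_r linK_mult_l
  Hh.lin_t_ds_arg Hk.lin_t_ds_arg Hh.ds_lin_comp Hk.ds_lin_comp

lemma S_sc: "S (sc c x) = sc c (S x)" using HV.lin_t_scale[OF S_lin] .
lemma S_sum_pairs: "S (\<Sum>(a,b)\<leftarrow>xs. sc (h a b) (k a b)) = (\<Sum>(a,b)\<leftarrow>xs. sc (h a b) (S (k a b)))"
  by (rule HV.lin_t_sum_pairs[OF S_lin])

lemma S_sum_gen: "S (\<Sum>(a,b)\<leftarrow>xs. F a b) = (\<Sum>(a,b)\<leftarrow>xs. S (F a b))"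
  by (induction xs) (auto simp: HV.lin_t_add[OF S_lin] HV.lin_t_zero[OF S_lin])

lemma aux_inner:
  "(\<Sum>(d1,d2)\<leftarrow>D d. (X * (b1*d1)) * (S d2 * Y)) = sc (eps d) (X * b1 * Y)"
proof -
  have "(\<Sum>(d1,d2)\<leftarrow>D d. (X * (b1*d1)) * (S d2 * Y)) = (\<Sum>(d1,d2)\<leftarrow>D d. (X*b1) * (d1 * S d2) * Y)"
    by (simp add: mult.assoc)
  also have "\<dots> = ((X*b1) * (\<Sum>(d1,d2)\<leftarrow>D d. d1 * S d2)) * Y"
    by (simp add: sum_list_mult_right_pairs sum_list_mult_left_pairs)
  also have "\<dots> = sc (eps d) (X * b1 * Y)"
    by (simp add: antip2 sc_mult_left sc_mult_right)
  finally show ?thesis .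
qed

lemma S_antimult: "S (x*y) = S y * S x"
proof -
  define Q where "Q = (\<Sum>(a,b)\<leftarrow>D x. \<Sum>(c,d)\<leftarrow>D y. \<Sum>(a1,a2)\<leftarrow>D a. \<Sum>(c1,c2)\<leftarrow>D c.
      (S (a1*c1) * (a2*c2)) * (S d * S b))"
  have i1: "(\<Sum>(a1,a2)\<leftarrow>D a. \<Sum>(c1,c2)\<leftarrow>D c. (S (a1*c1) * (a2*c2)) * K) = sc (eps a * eps c) K" for a c K
  proof -
    have "(\<Sum>(a1,a2)\<leftarrow>D a. \<Sum>(c1,c2)\<leftarrow>D c. (S (a1*c1) * (a2*c2)) * K)
        = (\<Sum>(a1,a2)\<leftarrow>D a. \<Sum>(c1,c2)\<leftarrow>D c. S (a1*c1) * (a2*c2)) * K"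
      by (simp add: sum_list_mult_right_pairs)
    also have "(\<Sum>(a1,a2)\<leftarrow>D a. \<Sum>(c1,c2)\<leftarrow>D c. S (a1*c1) * (a2*c2)) = (\<Sum>(e1,e2)\<leftarrow>D (a*c). S e1 * e2)"
      by (rule Hh.ds_mul[symmetric]) (auto intro!: lin_rules)
    also have "\<dots> = sc (eps (a*c)) 1" by (rule antip1)
    finally show ?thesis by (simp add: eps_mult sc_mult_left)
  qed
  have "Q = (\<Sum>(a,b)\<leftarrow>D x. \<Sum>(c,d)\<leftarrow>D y. sc (eps a * eps c) (S d * S b))"
    by (simp add: Q_def i1)
  also have "\<dots> = S y * S x"
  proof -
    have "S y * S x = (\<Sum>(c,d)\<leftarrow>D y. sc (eps c) (S d)) * (\<Sum>(a,b)\<leftarrow>D x. sc (eps a) (S b))"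
      by (subst (1) counit1[of y, symmetric], subst counit1[of x, symmetric]) (simp only: S_sum_pairs)
    also have "\<dots> = (\<Sum>(a,b)\<leftarrow>D x. \<Sum>(c,d)\<leftarrow>D y. sc (eps c) (S d) * sc (eps a) (S b))"
      by (simp only: sum_list_mult_right_pairs sum_list_mult_left_pairs)
    also have "\<dots> = (\<Sum>(a,b)\<leftarrow>D x. \<Sum>(c,d)\<leftarrow>D y. sc (eps a * eps c) (S d * S b))"
      by (simp add: sc_mult_left sc_mult_right mult.commute)
    finally show ?thesis by simp
  qed
  finally have Q1: "Q = S y * S x" .
  have "Q = (\<Sum>(a,b)\<leftarrow>D x. \<Sum>(a1,a2)\<leftarrow>D a. \<Sum>(c,d)\<leftarrow>D y. \<Sum>(c1,c2)\<leftarrow>D c.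
      (S (a1*c1) * (a2*c2)) * (S d * S b))"
    unfolding Q_def by (simp add: sum_list_swap_pairs[of _ "D y"])
  also have "\<dots> = (\<Sum>(a,b)\<leftarrow>D x. \<Sum>(b1,b2)\<leftarrow>D b. \<Sum>(c,d)\<leftarrow>D y. \<Sum>(c1,c2)\<leftarrow>D c.
      (S (a*c1) * (b1*c2)) * (S d * S b2))"
    by (rule Hh.ds_coass) (auto intro!: lin_rules)
  also have "\<dots> = (\<Sum>(a,b)\<leftarrow>D x. \<Sum>(b1,b2)\<leftarrow>D b. \<Sum>(c,d)\<leftarrow>D y. \<Sum>(d1,d2)\<leftarrow>D d.
      (S (a*c) * (b1*d1)) * (S d2 * S b2))"
    by (rule sum_pairs_cong, rule sum_pairs_cong, rule Hh.ds_coass; auto intro!: lin_rules)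
  also have "\<dots> = (\<Sum>(a,b)\<leftarrow>D x. \<Sum>(b1,b2)\<leftarrow>D b. \<Sum>(c,d)\<leftarrow>D y. sc (eps d) (S (a*c) * b1 * S b2))"
    by (simp only: aux_inner)
  also have "\<dots> = (\<Sum>(a,b)\<leftarrow>D x. \<Sum>(c,d)\<leftarrow>D y. \<Sum>(b1,b2)\<leftarrow>D b. sc (eps d) (S (a*c) * b1 * S b2))"
    by (rule sum_pairs_cong, rule sum_list_swap_pairs)
  also have "\<dots> = (\<Sum>(a,b)\<leftarrow>D x. \<Sum>(c,d)\<leftarrow>D y. sc (eps d) (sc (eps b) (S (a*c))))"
  proof -
    have "(\<Sum>(b1,b2)\<leftarrow>D b. sc (eps d) (Z * b1 * S b2)) = sc (eps d) (sc (eps b) Z)" for b d Z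
    proof -
      have "(\<Sum>(b1,b2)\<leftarrow>D b. sc (eps d) (Z * b1 * S b2)) = sc (eps d) (Z * (\<Sum>(b1,b2)\<leftarrow>D b. b1 * S b2))"
        by (simp add: Hh.s2_sum_list_pairs sum_list_mult_left_pairs mult.assoc)
      also have "\<dots> = sc (eps d) (sc (eps b) Z)" by (simp add: antip2 sc_mult_right)
      finally show ?thesis .
    qed
    then show ?thesis by simp
  qed
  also have "\<dots> = S (x*y)"
  proof -
    have "x * y = (\<Sum>(a,b)\<leftarrow>D x. sc (eps b) a) * (\<Sum>(c,d)\<leftarrow>D y. sc (eps d) c)"
      by (simp add: counit2)
    also have "\<dots> = (\<Sum>(a,b)\<leftarrow>D x. \<Sum>(c,d)\<leftarrow>D y. sc (eps b) a * sc (eps d) c)"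
      by (simp only: sum_list_mult_right_pairs sum_list_mult_left_pairs sum_list_swap_pairs[of _ "D y"])
    finally have "S (x*y) = (\<Sum>(a,b)\<leftarrow>D x. \<Sum>(c,d)\<leftarrow>D y. S (sc (eps b) a * sc (eps d) c))"
      by (simp add: S_sum_gen)
    then show ?thesis by (simp add: sc_mult_left sc_mult_right S_sc mult.commute)
  qed
  finally show ?thesis using Q1 by simp
qed

end

context two_vs begin
lemma lin_t_sum_gen: "lin_t s1 s2 f \<Longrightarrow> f (\<Sum>(a,b)\<leftarrow>xs. F a b) = (\<Sum>(a,b)\<leftarrow>xs. f (F a b))"
  by (induction xs) (auto simp: lin_t_add[of f] lin_t_zero[of f])
end

context hctx begin

lemma sumK_mult_right: "(\<Sum>(a,b)\<leftarrow>xs. F a b) * (k::'k) = (\<Sum>(a,b)\<leftarrow>xs. F a b * k)"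
  by (rule sum_list_mult_right_pairs)
lemma sumK_mult_left: "(k::'k) * (\<Sum>(a,b)\<leftarrow>xs. F a b) = (\<Sum>(a,b)\<leftarrow>xs. k * F a b)"
  by (rule sum_list_mult_left_pairs)

lemma Id1:
  assumes \<phi>: "lin_t sc (*) \<phi>" and \<psi>: "lin_t sc (*) \<psi>"
  shows "(\<Sum>(a,b)\<leftarrow>D w. \<phi> a * \<psi> (x*b)) = (\<Sum>(x1,x2)\<leftarrow>D x. \<Sum>(e,g)\<leftarrow>D (x2*w). \<phi> (S x1 * e) * \<psi> g)"
proof -
  have "(\<Sum>(x1,x2)\<leftarrow>D x. \<Sum>(e,g)\<leftarrow>D (x2*w). \<phi> (S x1 * e) * \<psi> g)
      = (\<Sum>(x1,x2)\<leftarrow>D x. \<Sum>(u,v)\<leftarrow>D x2. \<Sum>(e,g)\<leftarrow>D w. \<phi> (S x1 * (u*e)) * \<psi> (v*g))"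
    by (rule sum_pairs_cong, rule Hk.ds_mul) (auto intro!: lin_rules linK_comp[OF \<phi>] linK_comp[OF \<psi>])
  also have "\<dots> = (\<Sum>(a,b)\<leftarrow>D x. \<Sum>(a1,a2)\<leftarrow>D a. \<Sum>(e,g)\<leftarrow>D w. \<phi> (S a1 * (a2*e)) * \<psi> (b*g))"
    by (rule Hk.ds_coass[symmetric]) (auto intro!: lin_rules linK_comp[OF \<phi>] linK_comp[OF \<psi>])
  also have "\<dots> = (\<Sum>(a,b)\<leftarrow>D x. \<Sum>(e,g)\<leftarrow>D w. \<Sum>(a1,a2)\<leftarrow>D a. \<phi> (S a1 * (a2*e)) * \<psi> (b*g))"
    by (rule sum_pairs_cong, rule sum_list_swap_pairs)
  also have "\<dots> = (\<Sum>(a,b)\<leftarrow>D x. \<Sum>(e,g)\<leftarrow>D w. eps a * \<phi> e * \<psi> (b*g))"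
  proof -
    have "(\<Sum>(a1,a2)\<leftarrow>D a. \<phi> (S a1 * (a2*e)) * \<psi> (b*g)) = eps a * \<phi> e * \<psi> (b*g)" for a e b g
    proof -
      have "(\<Sum>(a1,a2)\<leftarrow>D a. \<phi> (S a1 * (a2*e)) * \<psi> (b*g)) = \<phi> ((\<Sum>(a1,a2)\<leftarrow>D a. S a1 * a2) * e) * \<psi> (b*g)"
        by (simp add: sumK_mult_right HK.lin_t_sum_gen[OF \<phi>] sum_list_mult_right_pairs mult.assoc)
      also have "\<dots> = eps a * \<phi> e * \<psi> (b*g)"
        by (simp only: antip1 sc_mult_left mult_1_left HK.lin_t_scale[OF \<phi>])
      finally show ?thesis .
    qed
    then show ?thesis by simp
  qed
  also have "\<dots> = (\<Sum>(e,g)\<leftarrow>D w. \<Sum>(a,b)\<leftarrow>D x. eps a * \<phi> e * \<psi> (b*g))"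
    by (rule sum_list_swap_pairs)
  also have "\<dots> = (\<Sum>(e,g)\<leftarrow>D w. \<phi> e * \<psi> (x*g))"
  proof -
    have "\<psi> (x*g) = (\<Sum>(a,b)\<leftarrow>D x. eps a * \<psi> (b*g))" for g
    proof -
      have "x * g = (\<Sum>(a,b)\<leftarrow>D x. sc (eps a) (b*g))"
      proof -
        have "x * g = (\<Sum>(a,b)\<leftarrow>D x. sc (eps a) b) * g" by (simp only: counit1)
        also have "\<dots> = (\<Sum>(a,b)\<leftarrow>D x. sc (eps a) (b*g))" by (simp only: sum_list_mult_right_pairs sc_mult_left)
        finally show ?thesis .
      qed
      then show ?thesis by (simp only: HK.lin_t_sum_gen[OF \<psi>] HK.lin_t_scale[OF \<psi>])
    qed
    then have "\<phi> e * \<psi> (x*g) = (\<Sum>(a,b)\<leftarrow>D x. eps a * \<phi> e * \<psi> (b*g))" for e g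
      by (simp only: sumK_mult_left) (rule sum_pairs_cong, simp only: mult.assoc mult.left_commute)
    then show ?thesis by (simp only:)
  qed
  finally show ?thesis by simp
qed


lemma sum_map_snd_mult:
  "(\<Sum>(a,b)\<leftarrow>map (\<lambda>(a,b). (a, b*P)) xs. K a b) = (\<Sum>(a,b)\<leftarrow>xs. K a (b*P))"
  by (induction xs) auto

lemma R2:
  assumes G1: "tens_eq sc (map (\<lambda>(a,b). (a, b*P)) (D P)) [(P,P)]"
    and \<nu>: "lin_t sc (*) \<nu>" and \<phi>: "lin_t sc (*) \<phi>" and \<psi>: "lin_t sc (*) \<psi>"
  shows "(\<Sum>(a,b)\<leftarrow>D P. \<phi> a * \<psi> ((\<Sum>(p,q)\<leftarrow>D P. sc (\<nu> p) q)*b))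
       = (\<Sum>(a,b)\<leftarrow>D P. \<phi> (S (\<Sum>(p,q)\<leftarrow>D P. sc (\<nu> p) q) * a) * \<psi> b)"
proof -
  define K where "K p w = (\<Sum>(p1,p2)\<leftarrow>D p. \<nu> p1 * (\<Sum>(e,g)\<leftarrow>D w. \<phi> (S p2 * e) * \<psi> g))" for p w
  have L1: "\<psi> ((\<Sum>(p,q)\<leftarrow>D P. sc (\<nu> p) q)*b) = (\<Sum>(p,q)\<leftarrow>D P. \<nu> p * \<psi> (q*b))" for b
    by (simp only: sum_list_mult_right_pairs sc_mult_left HK.lin_t_sum_gen[OF \<psi>] HK.lin_t_scale[OF \<psi>])
  have "(\<Sum>(a,b)\<leftarrow>D P. \<phi> a * \<psi> ((\<Sum>(p,q)\<leftarrow>D P. sc (\<nu> p) q)*b))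
      = (\<Sum>(a,b)\<leftarrow>D P. \<Sum>(p,q)\<leftarrow>D P. \<nu> p * (\<phi> a * \<psi> (q*b)))"
    by (simp only: L1 sumK_mult_left) (rule sum_pairs_cong, rule sum_pairs_cong, simp only: mult.left_commute)
  also have "\<dots> = (\<Sum>(p,q)\<leftarrow>D P. \<Sum>(a,b)\<leftarrow>D P. \<nu> p * (\<phi> a * \<psi> (q*b)))"
    by (rule sum_list_swap_pairs)
  also have "\<dots> = (\<Sum>(p,q)\<leftarrow>D P. \<nu> p * (\<Sum>(a,b)\<leftarrow>D P. \<phi> a * \<psi> (q*b)))"
    by (simp only: sumK_mult_left)
  also have "\<dots> = (\<Sum>(p,q)\<leftarrow>D P. \<nu> p * (\<Sum>(q1,q2)\<leftarrow>D q. \<Sum>(e,g)\<leftarrow>D (q2*P). \<phi> (S q1 * e) * \<psi> g))"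
    by (simp only: Id1[OF \<phi> \<psi>])
  also have "\<dots> = (\<Sum>(p,q)\<leftarrow>D P. \<Sum>(q1,q2)\<leftarrow>D q. \<nu> p * (\<Sum>(e,g)\<leftarrow>D (q2*P). \<phi> (S q1 * e) * \<psi> g))"
    by (simp only: sumK_mult_left)
  also have "\<dots> = (\<Sum>(p,q)\<leftarrow>D P. \<Sum>(p1,p2)\<leftarrow>D p. \<nu> p1 * (\<Sum>(e,g)\<leftarrow>D (q*P). \<phi> (S p2 * e) * \<psi> g))"
    by (rule Hk.ds_coass[where x=P and G="\<lambda>a b c. \<nu> a * (\<Sum>(e,g)\<leftarrow>D (c*P). \<phi> (S b * e) * \<psi> g)", symmetric])
       (auto intro!: lin_rules linK_comp[OF \<phi>] linK_comp[OF \<psi>] linK_comp[OF \<nu>])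
  also have "\<dots> = (\<Sum>(p,q)\<leftarrow>D P. K p (q*P))" by (simp only: K_def)
  also have "\<dots> = (\<Sum>(p,w)\<leftarrow>map (\<lambda>(a,b). (a, b*P)) (D P). K p w)" by (simp only: sum_map_snd_mult)
  also have "\<dots> = (\<Sum>(p,w)\<leftarrow>[(P,P)]. K p w)"
    by (rule HK.transfer2[OF G1]) (auto simp only: K_def intro!: lin_rules linK_comp[OF \<phi>] linK_comp[OF \<psi>] linK_comp[OF \<nu>])
  also have "\<dots> = K P P" by simp
  also have "\<dots> = (\<Sum>(a,b)\<leftarrow>D P. \<phi> (S (\<Sum>(p,q)\<leftarrow>D P. sc (\<nu> p) q) * a) * \<psi> b)"
  proof -
    have R: "\<phi> (S (\<Sum>(p,q)\<leftarrow>D P. sc (\<nu> p) q) * a) = (\<Sum>(p,q)\<leftarrow>D P. \<nu> p * \<phi> (S q * a))" for a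
      by (simp only: S_sum_pairs sum_list_mult_right_pairs sc_mult_left HK.lin_t_sum_gen[OF \<phi>] HK.lin_t_scale[OF \<phi>])
    have "(\<Sum>(a,b)\<leftarrow>D P. \<phi> (S (\<Sum>(p,q)\<leftarrow>D P. sc (\<nu> p) q) * a) * \<psi> b)
        = (\<Sum>(a,b)\<leftarrow>D P. \<Sum>(p,q)\<leftarrow>D P. \<nu> p * (\<phi> (S q * a) * \<psi> b))"
      by (simp only: R sumK_mult_right) (rule sum_pairs_cong, rule sum_pairs_cong, simp only: mult.assoc)
    also have "\<dots> = (\<Sum>(p,q)\<leftarrow>D P. \<Sum>(a,b)\<leftarrow>D P. \<nu> p * (\<phi> (S q * a) * \<psi> b))"
      by (rule sum_list_swap_pairs)
    also have "\<dots> = K P P" unfolding K_def by (simp only: sumK_mult_left)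
    finally show ?thesis by simp
  qed
  finally show ?thesis .
qed

end

definition good_proj :: "'h::ring_1 set \<Rightarrow> 'h set \<Rightarrow> ('h \<Rightarrow> 'h) \<Rightarrow> bool" where
  "good_proj V J p \<longleftrightarrow> (\<forall>a\<in>V. p a \<in> J) \<and> (\<forall>j\<in>J. p j = j) \<and>
     (\<forall>a\<in>V. \<forall>c\<in>V. p (a*c) = p a * c) \<and> (\<forall>a\<in>V. \<forall>b\<in>V. p (a+b) = p a + p b)"

definition msum :: "'m::ab_group_add set \<Rightarrow> 'm set \<Rightarrow> 'm set" where
  "msum A B = {x + y | x y. x \<in> A \<and> y \<in> B}"

locale rmod =
  fixes V :: "'h::ring_1 set" and e :: 'h and M :: "'m::ab_group_add set" and act
  assumes V0: "0 \<in> V" and Vadd: "\<And>x y. x \<in> V \<Longrightarrow> y \<in> V \<Longrightarrow> x + y \<in> V"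
    and Vmul: "\<And>x y. x \<in> V \<Longrightarrow> y \<in> V \<Longrightarrow> x * y \<in> V"
    and Vneg: "\<And>x. x \<in> V \<Longrightarrow> - x \<in> V" and Ve: "e \<in> V"
    and rm: "right_module V e M act"
begin

lemma M0: "0 \<in> M" and Madd: "x \<in> M \<Longrightarrow> y \<in> M \<Longrightarrow> x + y \<in> M" and Mneg: "x \<in> M \<Longrightarrow> - x \<in> M"
  and Mact: "x \<in> M \<Longrightarrow> a \<in> V \<Longrightarrow> act x a \<in> M"
  and act_addl: "x \<in> M \<Longrightarrow> y \<in> M \<Longrightarrow> a \<in> V \<Longrightarrow> act (x + y) a = act x a + act y a"
  and act_addr: "x \<in> M \<Longrightarrow> a \<in> V \<Longrightarrow> b \<in> V \<Longrightarrow> act x (a + b) = act x a + act x b"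
  and act_mult: "x \<in> M \<Longrightarrow> a \<in> V \<Longrightarrow> b \<in> V \<Longrightarrow> act x (a * b) = act (act x a) b"
  and act_e: "x \<in> M \<Longrightarrow> act x e = x"
  using rm unfolding right_module_def by blast+

lemma Vdiff: "x \<in> V \<Longrightarrow> y \<in> V \<Longrightarrow> x - y \<in> V"
  using Vadd Vneg by (metis diff_conv_add_uminus)

lemma act_0r: "x \<in> M \<Longrightarrow> act x 0 = 0"
  using act_addr[of x 0 0] V0 by simp
lemma act_0l: "a \<in> V \<Longrightarrow> act 0 a = 0"
  using act_addl[of 0 0 a] M0 by simp
lemma act_negr: "x \<in> M \<Longrightarrow> a \<in> V \<Longrightarrow> act x (- a) = - act x a"
  using act_addr[of x a "- a"] Vneg[of a] act_0r[of x] by (simp add: eq_neg_iff_add_eq_0 add.commute)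
lemma act_diffr: "x \<in> M \<Longrightarrow> a \<in> V \<Longrightarrow> b \<in> V \<Longrightarrow> act x (a - b) = act x a - act x b"
  using act_addr[of x a "- b"] act_negr[of x b] Vneg[of b] by simp
lemma act_negl: "x \<in> M \<Longrightarrow> a \<in> V \<Longrightarrow> act (- x) a = - act x a"
  using act_addl[of x "- x" a] Mneg[of x] act_0l[of a] by (simp add: eq_neg_iff_add_eq_0 add.commute)

lemma sub_props:
  assumes "submodule V M act N"
  shows "N \<subseteq> M" "0 \<in> N" "\<And>x y. x \<in> N \<Longrightarrow> y \<in> N \<Longrightarrow> x + y \<in> N" "\<And>x. x \<in> N \<Longrightarrow> - x \<in> N"
    "\<And>x a. x \<in> N \<Longrightarrow> a \<in> V \<Longrightarrow> act x a \<in> N"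
  using assms by (auto simp: submodule_def)

lemma sub_diff: "submodule V M act N \<Longrightarrow> x \<in> N \<Longrightarrow> y \<in> N \<Longrightarrow> x - y \<in> N"
  using sub_props(3,4) by (metis diff_conv_add_uminus)

lemma msum_sub:
  assumes N: "submodule V M act N" and K: "submodule V M act K"
  shows "submodule V M act (msum N K)"
  unfolding submodule_def msum_def
proof (intro conjI ballI)
  show "{x + y |x y. x \<in> N \<and> y \<in> K} \<subseteq> M"
    using sub_props(1)[OF N] sub_props(1)[OF K] Madd by blast
  show "0 \<in> {x + y |x y. x \<in> N \<and> y \<in> K}"
    using sub_props(2)[OF N] sub_props(2)[OF K] by force
next
  fix u v assume u: "u \<in> {x + y |x y. x \<in> N \<and> y \<in> K}" and v: "v \<in> {x + y |x y. x \<in> N \<and> y \<in> K}"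
  then obtain x1 y1 x2 y2 where "u = x1 + y1" "v = x2 + y2" "x1 \<in> N" "y1 \<in> K" "x2 \<in> N" "y2 \<in> K" by blast
  then show "u + v \<in> {x + y |x y. x \<in> N \<and> y \<in> K}"
    using sub_props(3)[OF N] sub_props(3)[OF K]
    by (intro CollectI exI[of _ "x1 + x2"] exI[of _ "y1 + y2"]) (simp add: algebra_simps)
next
  fix u assume "u \<in> {x + y |x y. x \<in> N \<and> y \<in> K}"
  then obtain x1 y1 where "u = x1 + y1" "x1 \<in> N" "y1 \<in> K" by blast
  then show "- u \<in> {x + y |x y. x \<in> N \<and> y \<in> K}"
    using sub_props(4)[OF N] sub_props(4)[OF K]
    by (intro CollectI exI[of _ "- x1"] exI[of _ "- y1"]) (simp add: algebra_simps)
next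
  fix u a assume "u \<in> {x + y |x y. x \<in> N \<and> y \<in> K}" "a \<in> V"
  then obtain x1 y1 where "u = x1 + y1" "x1 \<in> N" "y1 \<in> K" by blast
  then show "act u a \<in> {x + y |x y. x \<in> N \<and> y \<in> K}"
    using sub_props(5)[OF N] sub_props(5)[OF K] sub_props(1)[OF N] sub_props(1)[OF K] \<open>a \<in> V\<close> act_addl
    by blast
qed


lemma good_proj_props:
  assumes "good_proj V J p"
  shows "\<And>a. a \<in> V \<Longrightarrow> p a \<in> J" "\<And>j. j \<in> J \<Longrightarrow> p j = j"
    "\<And>a c. a \<in> V \<Longrightarrow> c \<in> V \<Longrightarrow> p (a*c) = p a * c"
    "\<And>a b. a \<in> V \<Longrightarrow> b \<in> V \<Longrightarrow> p (a+b) = p a + p b"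
  using assms by (auto simp: good_proj_def)

lemma cr:
  assumes proj: "\<And>J. submodule V V (*) J \<Longrightarrow> \<exists>p. good_proj V J p"
  shows "completely_reducible V M act"
  unfolding completely_reducible_def
proof (intro allI impI)
  fix N assume N: "submodule V M act N"
  define A where "A = {K. submodule V M act K \<and> K \<inter> N = {0}}"
  have sub0: "submodule V M act {0}"
    unfolding submodule_def using M0 act_0l by auto
  have "\<exists>K\<in>A. \<forall>X\<in>A. K \<subseteq> X \<longrightarrow> X = K"
  proof (rule Zorn_Lemma2, intro ballI)
    fix C assume C: "C \<in> chains A"
    show "\<exists>U\<in>A. \<forall>X\<in>C. X \<subseteq> U"
    proof (cases "C = {}")
      case True
      then show ?thesis using sub0 sub_props(2)[OF N] unfolding A_def by auto
    next
      case False
      have CA: "\<And>X. X \<in> C \<Longrightarrow> X \<in> A" using chainsD2[OF C] by blast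
      have ch: "\<And>X Y. X \<in> C \<Longrightarrow> Y \<in> C \<Longrightarrow> X \<subseteq> Y \<or> Y \<subseteq> X" using chainsD[OF C] by blast
      have subX: "\<And>X. X \<in> C \<Longrightarrow> submodule V M act X" using CA unfolding A_def by blast
      have "submodule V M act (\<Union>C)"
        unfolding submodule_def
      proof (intro conjI ballI)
        show "\<Union>C \<subseteq> M" using subX sub_props(1) by blast
        show "0 \<in> \<Union>C" using False subX sub_props(2) by blast
      next
        fix x y assume "x \<in> \<Union>C" "y \<in> \<Union>C"
        then obtain X Y where XY: "X \<in> C" "Y \<in> C" "x \<in> X" "y \<in> Y" by blast
        then show "x + y \<in> \<Union>C"
          using ch[OF XY(1,2)] subX sub_props(3) by blast
      next
        fix x assume "x \<in> \<Union>C"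
        then show "- x \<in> \<Union>C" using subX sub_props(4) by blast
      next
        fix x a assume "x \<in> \<Union>C" "a \<in> V"
        then show "act x a \<in> \<Union>C" using subX sub_props(5) by blast
      qed
      moreover have "\<Union>C \<inter> N = {0}"
        using CA False unfolding A_def by blast
      ultimately show ?thesis unfolding A_def by blast
    qed
  qed
  then obtain K where K: "K \<in> A" and Kmax: "\<And>X. X \<in> A \<Longrightarrow> K \<subseteq> X \<Longrightarrow> X = K" by blast
  have Ksub: "submodule V M act K" and KN: "K \<inter> N = {0}" using K unfolding A_def by auto
  define U where "U = msum N K"
  have Usub: "submodule V M act U" unfolding U_def by (rule msum_sub[OF N Ksub])
  have "M \<subseteq> U"
  proof
    fix m assume m: "m \<in> M"
    show "m \<in> U"
    proof (rule ccontr)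
      assume mU: "m \<notin> U"
      define J where "J = {a \<in> V. act m a \<in> U}"
      have Jsub: "submodule V V (*) J"
        unfolding submodule_def
      proof (intro conjI ballI)
        show "J \<subseteq> V" unfolding J_def by blast
        show "0 \<in> J" unfolding J_def using V0 act_0r[OF m] sub_props(2)[OF Usub] by simp
      next
        fix a b assume "a \<in> J" "b \<in> J"
        then show "a + b \<in> J" unfolding J_def using act_addr[OF m] Vadd sub_props(3)[OF Usub] by auto
      next
        fix a assume "a \<in> J"
        then show "- a \<in> J" unfolding J_def using act_negr[OF m] Vneg sub_props(4)[OF Usub] by auto
      next
        fix a c assume "a \<in> J" "c \<in> V"
        then show "a * c \<in> J" unfolding J_def using act_mult[OF m] Vmul sub_props(5)[OF Usub] by auto
      qed
      obtain p where p: "good_proj V J p" using proj[OF Jsub] by blast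
      have JV: "J \<subseteq> V" unfolding J_def by blast
      note pp = good_proj_props[OF p]
      have pV: "a \<in> V \<Longrightarrow> p a \<in> V" for a using pp(1) JV by blast
      have p0: "p 0 = 0" using pp(4)[OF V0 V0] by simp
      have pneg: "a \<in> V \<Longrightarrow> p (- a) = - p a" for a
        using pp(4)[OF _ Vneg, of a a] p0 by (simp add: eq_neg_iff_add_eq_0 add.commute)
      have pdiff: "a \<in> V \<Longrightarrow> b \<in> V \<Longrightarrow> p (a - b) = p a - p b" for a b
        using pp(4)[of a "- b"] pneg[of b] Vneg[of b] by simp
      define q where "q a = a - p a" for a
      have qV: "a \<in> V \<Longrightarrow> q a \<in> V" for a unfolding q_def using Vdiff pV by blast
      have qadd: "a \<in> V \<Longrightarrow> b \<in> V \<Longrightarrow> q (a + b) = q a + q b" for a b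
        unfolding q_def using pp(4) by simp
      have qneg: "a \<in> V \<Longrightarrow> q (- a) = - q a" for a unfolding q_def using pneg by simp
      have qmul: "a \<in> V \<Longrightarrow> c \<in> V \<Longrightarrow> q (a * c) = q a * c" for a c
        unfolding q_def using pp(3) by (simp add: left_diff_distrib)
      have q0: "q 0 = 0" unfolding q_def using p0 by simp
      have qJ: "a \<in> V \<Longrightarrow> q a \<in> J \<Longrightarrow> q a = 0" for a
      proof -
        assume a: "a \<in> V" and qa: "q a \<in> J"
        have "p (q a) = q a" using pp(2)[OF qa] .
        moreover have "p (q a) = 0" unfolding q_def using pdiff[OF a pV[OF a]] pp(2)[OF pp(1)[OF a]] by simp
        ultimately show "q a = 0" by simp
      qed
      define L where "L = {act m (q a) | a. a \<in> V}"
      have Lsub: "submodule V M act L"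
        unfolding submodule_def
      proof (intro conjI ballI)
        show "L \<subseteq> M" unfolding L_def using Mact[OF m] qV by blast
        show "0 \<in> L" unfolding L_def using V0 q0 act_0r[OF m] by (intro CollectI exI[of _ 0]) simp
      next
        fix u v assume "u \<in> L" "v \<in> L"
        then obtain a b where ab: "a \<in> V" "b \<in> V" "u = act m (q a)" "v = act m (q b)" unfolding L_def by blast
        then show "u + v \<in> L" unfolding L_def
          using act_addr[OF m qV qV] qadd Vadd by (intro CollectI exI[of _ "a + b"]) simp
      next
        fix u assume "u \<in> L"
        then obtain a where a: "a \<in> V" "u = act m (q a)" unfolding L_def by blast
        then show "- u \<in> L" unfolding L_def
          using act_negr[OF m qV] qneg Vneg by (intro CollectI exI[of _ "- a"]) simp
      next
        fix u c assume "u \<in> L" "c \<in> V"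
        then obtain a where a: "a \<in> V" "u = act m (q a)" unfolding L_def by blast
        then show "act u c \<in> L" unfolding L_def
          using act_mult[OF m qV \<open>c \<in> V\<close>] qmul[OF a(1) \<open>c \<in> V\<close>] Vmul \<open>c \<in> V\<close>
          by (intro CollectI exI[of _ "a * c"]) simp
      qed
      define K' where "K' = msum K L"
      have K'sub: "submodule V M act K'" unfolding K'_def by (rule msum_sub[OF Ksub Lsub])
      have LU: "l \<in> L \<Longrightarrow> l \<in> U \<Longrightarrow> l = 0" for l
      proof -
        assume "l \<in> L" "l \<in> U"
        then obtain a where a: "a \<in> V" "l = act m (q a)" unfolding L_def by blast
        then have "q a \<in> J" unfolding J_def using qV \<open>l \<in> U\<close> by simp
        then have "q a = 0" using qJ a by simp
        then show "l = 0" using a act_0r[OF m] by simp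
      qed
      have "K' \<inter> N = {0}"
      proof
        show "{0} \<subseteq> K' \<inter> N" using sub_props(2)[OF K'sub] sub_props(2)[OF N] by simp
        show "K' \<inter> N \<subseteq> {0}"
        proof
          fix x assume x: "x \<in> K' \<inter> N"
          then obtain k l where kl: "k \<in> K" "l \<in> L" "x = k + l" unfolding K'_def msum_def by blast
          have "l = x + (- k)" using kl by simp
          moreover have "x + (- k) \<in> U" unfolding U_def msum_def using x kl sub_props(4)[OF Ksub] by blast
          ultimately have "l = 0" using LU kl by simp
          then have "k \<in> K \<inter> N" using kl x by simp
          then have "k = 0" using KN by blast
          then show "x \<in> {0}" using kl \<open>l = 0\<close> by simp
        qed
      qed
      then have K'A: "K' \<in> A" unfolding A_def using K'sub by blast
      have KK': "K \<subseteq> K'"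
      proof
        fix k assume "k \<in> K"
        then show "k \<in> K'" unfolding K'_def msum_def using sub_props(2)[OF Lsub] by force
      qed
      have eq: "K' = K" by (rule Kmax[OF K'A KK'])
      define l0 where "l0 = act m (q e)"
      have "l0 \<in> L" unfolding L_def l0_def using Ve by blast
      then have "l0 \<in> K'" unfolding K'_def msum_def using sub_props(2)[OF Ksub] by force
      then have "l0 \<in> K" using eq by simp
      then have l0U: "l0 \<in> U" unfolding U_def msum_def using sub_props(2)[OF N] by force
      have peJ: "p e \<in> J" using pp(1)[OF Ve] .
      then have "act m (p e) \<in> U" unfolding J_def by simp
      moreover have "m = l0 + act m (p e)"
      proof -
        have "m = act m e" using act_e[OF m] by simp
        also have "\<dots> = act m (q e + p e)" unfolding q_def by simp
        also have "\<dots> = l0 + act m (p e)" unfolding l0_def using act_addr[OF m qV[OF Ve] pV[OF Ve]] by simp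
        finally show ?thesis .
      qed
      ultimately have "m \<in> U" using l0U sub_props(3)[OF Usub] by metis
      then show False using mU by simp
    qed
  qed
  moreover have "U \<subseteq> M" using sub_props(1)[OF Usub] .
  ultimately have "U = M" by blast
  then show "\<exists>N'. submodule V M act N' \<and> N \<inter> N' = {0} \<and> {x + y |x y. x \<in> N \<and> y \<in> N'} = M"
    using Ksub KN unfolding U_def msum_def by blast
qed

end


locale mctx = hctx sc D eps S for sc :: "'k::field \<Rightarrow> 'h::ring_1 \<Rightarrow> 'h" and D eps S +
  fixes P y :: 'h
  assumes rglp: "right_group_like_proj sc D P"
    and frob: "frobenius sc (VP sc D P)"
    and cyc: "cyclic_elem sc D S P y"
begin

abbreviation "V \<equiv> VP sc D P"
abbreviation "W \<equiv> PV sc D P"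
abbreviation "T \<equiv> (\<lambda>a. S a * y)"

lemma V0: "0 \<in> V" using frob by (simp add: frobenius_def)
lemma Vlin: "x \<in> V \<Longrightarrow> z \<in> V \<Longrightarrow> sc c x + z \<in> V" using frob by (simp add: frobenius_def)
lemma Vmul: "x \<in> V \<Longrightarrow> z \<in> V \<Longrightarrow> x * z \<in> V" using frob by (simp add: frobenius_def)
lemma Vadd: "x \<in> V \<Longrightarrow> z \<in> V \<Longrightarrow> x + z \<in> V" using Vlin[of x z 1] by simp
lemma Vsc: "x \<in> V \<Longrightarrow> sc c x \<in> V" using Vlin[of x 0 c] V0 by simp
lemma Vneg: "x \<in> V \<Longrightarrow> - x \<in> V" using Vsc[of x "-1"] by (simp add: HV.s1.scale_minus_left)
lemma Vdiff: "x \<in> V \<Longrightarrow> z \<in> V \<Longrightarrow> x - z \<in> V" using Vadd Vneg by (metis diff_conv_add_uminus)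
lemma Vspan: "\<exists>B. finite B \<and> B \<subseteq> V \<and> V = HV.s1.span B" using frob by (simp add: frobenius_def)
lemma Vsubspace: "HV.s1.subspace V"
  unfolding HV.s1.subspace_def using V0 Vadd Vsc by blast

lemma unit_ex: "\<exists>e\<in>V. \<forall>a\<in>V. e * a = a \<and> a * e = a" using frob by (simp add: frobenius_def)

definition "e = alg_unit V"
lemma e_props: "e \<in> V" "\<And>a. a \<in> V \<Longrightarrow> e * a = a" "\<And>a. a \<in> V \<Longrightarrow> a * e = a"
proof -
  obtain e0 where e0: "e0 \<in> V" "\<forall>a\<in>V. e0 * a = a \<and> a * e0 = a" using unit_ex by blast
  have "alg_unit V = e0"
    unfolding alg_unit_def
  proof (rule the_equality)
    show "e0 \<in> V \<and> (\<forall>a\<in>V. e0 * a = a \<and> a * e0 = a)" using e0 by blast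
    fix e1 assume "e1 \<in> V \<and> (\<forall>a\<in>V. e1 * a = a \<and> a * e1 = a)"
    then show "e1 = e0" using e0 by metis
  qed
  then show "e \<in> V" "\<And>a. a \<in> V \<Longrightarrow> e * a = a" "\<And>a. a \<in> V \<Longrightarrow> a * e = a"
    using e0 unfolding e_def by auto
qed

lemma VP_mem: "lin_t sc (*) \<nu> \<Longrightarrow> (\<Sum>(a,b)\<leftarrow>D P. sc (\<nu> a) b) \<in> V"
  unfolding VP_def lin_fun_t by blast
lemma PV_mem: "lin_t sc (*) \<nu> \<Longrightarrow> (\<Sum>(a,b)\<leftarrow>D P. sc (\<nu> b) a) \<in> W"
  unfolding PV_def lin_fun_t by blast
lemma VP_obt: "x \<in> V \<Longrightarrow> \<exists>\<nu>. lin_t sc (*) \<nu> \<and> x = (\<Sum>(a,b)\<leftarrow>D P. sc (\<nu> a) b)"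
  unfolding VP_def lin_fun_t by blast
lemma PV_obt: "x \<in> W \<Longrightarrow> \<exists>\<nu>. lin_t sc (*) \<nu> \<and> x = (\<Sum>(a,b)\<leftarrow>D P. sc (\<nu> b) a)"
  unfolding PV_def lin_fun_t by blast

lemma G1: "tens_eq sc (map (\<lambda>(a,b). (a, b*P)) (D P)) [(P,P)]"
  using rglp by (simp add: right_group_like_proj_def)

lemma T_lin: "lin_t sc sc T" by (intro lin_rules)
lemma W_eq: "T ` V = W" using cyc by (simp add: cyclic_elem_def)
lemma y_W: "y \<in> W" using cyc by (simp add: cyclic_elem_def)

lemma T_inj0:
  assumes a0: "a0 \<in> V" "T a0 = 0" shows "a0 = 0"
proof (rule ccontr)
  assume ne: "a0 \<noteq> 0"
  interpret VP2: vector_space_pair sc sc using vs by (simp add: vector_space_pair_def)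
  obtain B where B: "finite B" "B \<subseteq> V" "V = HV.s1.span B" using Vspan by blast
  have i0: "HV.s1.independent {a0}" using ne by simp
  obtain B1 where B1: "{a0} \<subseteq> B1" "B1 \<subseteq> V" "HV.s1.independent B1" "V \<subseteq> HV.s1.span B1"
    using HV.s1.maximal_independent_subset_extend[OF _ i0, of V] a0 by auto
  have fin1: "finite B1" using HV.s1.independent_span_bound[OF B(1) B1(3)] B1(2) B(3) by auto
  define BB where "BB = HV.s1.extend_basis B1"
  have BB: "HV.s1.independent BB" "HV.s1.span BB = UNIV" "B1 \<subseteq> BB"
    using B1(3) by (auto simp: BB_def HV.s1.independent_extend_basis HV.s1.extend_basis_superset)
  define \<psi> where "\<psi> v x = HV.s1.representation BB x v" for v x
  have \<psi>lin: "lin_t sc (*) (\<psi> v)" for v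
    unfolding lin_t_def \<psi>_def using BB by (simp add: HV.s1.representation_add HV.s1.representation_scale)
  have \<psi>d: "\<psi> v u = (if v = u then 1 else 0)" if "u \<in> B1" for u v
    unfolding \<psi>_def using HV.s1.representation_basis[OF BB(1)] that BB(3) by auto
  have "\<forall>v\<in>B1. \<exists>\<nu>. lin_t sc (*) \<nu> \<and> v = (\<Sum>(a,b)\<leftarrow>D P. sc (\<nu> a) b)"
    using VP_obt B1(2) by blast
  then obtain \<nu> where \<nu>: "\<And>v. v \<in> B1 \<Longrightarrow> lin_t sc (*) (\<nu> v)"
    "\<And>v. v \<in> B1 \<Longrightarrow> v = (\<Sum>(a,b)\<leftarrow>D P. sc (\<nu> v a) b)" by metis
  define w where "w v = (\<Sum>(a,b)\<leftarrow>D P. sc (\<psi> v b) a)" for v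
  have wW: "w v \<in> W" for v unfolding w_def by (rule PV_mem[OF \<psi>lin])
  have key: "\<nu> u (w v) = (if v = u then 1 else 0)" if "u \<in> B1" for u v
  proof -
    have "\<nu> u (w v) = (\<Sum>(a,b)\<leftarrow>D P. \<psi> v b * \<nu> u a)"
      unfolding w_def by (rule HK.lin_t_sum_pairs[OF \<nu>(1)[OF that]])
    also have "\<dots> = (\<Sum>(a,b)\<leftarrow>D P. \<nu> u a * \<psi> v b)" by (simp add: mult.commute)
    also have "\<dots> = \<psi> v (\<Sum>(a,b)\<leftarrow>D P. sc (\<nu> u a) b)"
      by (rule HK.lin_t_sum_pairs[OF \<psi>lin, symmetric])
    also have "\<dots> = \<psi> v u" using \<nu>(2)[OF that] by simp
    finally show ?thesis using \<psi>d[OF that] by simp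
  qed
  have winj: "inj_on w B1"
  proof (rule inj_onI)
    fix u v assume uv: "u \<in> B1" "v \<in> B1" "w u = w v"
    have "\<nu> u (w u) = \<nu> u (w v)" using uv by simp
    then show "u = v" using key[OF uv(1), of u] key[OF uv(1), of v] by (auto split: if_splits)
  qed
  have windep: "HV.s1.independent (w ` B1)"
  proof (rule HV.s1.independent_if_scalars_zero)
    show "finite (w ` B1)" using fin1 by simp
    fix f x assume sum0: "(\<Sum>x\<in>w ` B1. sc (f x) x) = 0" and x: "x \<in> w ` B1"
    then obtain u where u: "u \<in> B1" "x = w u" by blast
    have "\<nu> u (\<Sum>x\<in>w ` B1. sc (f x) x) = (\<Sum>x\<in>w ` B1. f x * \<nu> u x)"
      by (simp add: HK.lin_t_sum[OF \<nu>(1)[OF u(1)]] HK.lin_t_scale[OF \<nu>(1)[OF u(1)]])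
    also have "\<dots> = (\<Sum>v\<in>B1. f (w v) * \<nu> u (w v))" by (rule sum.reindex[OF winj, unfolded comp_def])
    also have "\<dots> = (\<Sum>v\<in>B1. if v = u then f (w v) else 0)" by (rule sum.cong) (auto simp: key[OF u(1)])
    also have "\<dots> = f (w u)" using u(1) fin1 by (simp add: sum.delta)
    finally have "f (w u) = \<nu> u 0" using sum0 by simp
    then show "f x = 0" using u HK.lin_t_zero[OF \<nu>(1)[OF u(1)]] by simp
  qed
  have cardw: "card (w ` B1) = card B1" using card_image[OF winj] .
  have Tlin': "Vector_Spaces.linear sc sc T" by (rule HV.lin_t_linear[OF T_lin])
  have "W \<subseteq> HV.s1.span (T ` B1)"
    using VP2.linear_spans_image[OF Tlin' B1(4)] W_eq by simp
  also have "T ` B1 = insert 0 (T ` (B1 - {a0}))" using a0 B1(1) by auto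
  finally have Wsp: "W \<subseteq> HV.s1.span (T ` (B1 - {a0}))" by simp
  have "w ` B1 \<subseteq> HV.s1.span (T ` (B1 - {a0}))" using wW Wsp by blast
  then have "card (w ` B1) \<le> card (T ` (B1 - {a0}))"
    using HV.s1.independent_span_bound[OF _ windep] fin1 by auto
  also have "\<dots> \<le> card (B1 - {a0})" using fin1 by (simp add: card_image_le)
  also have "\<dots> < card B1" using card_Diff1_less[OF fin1, of a0] B1(1) by blast
  finally show False using cardw by simp
qed


lemma lin_comp: "lin_t sc sc g \<Longrightarrow> lin_t sc sc f \<Longrightarrow> lin_t sc sc (\<lambda>x. g (f x))"
  unfolding lin_t_def by simp

lemma T_inj: "a \<in> V \<Longrightarrow> b \<in> V \<Longrightarrow> T a = T b \<Longrightarrow> a = b"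
proof -
  assume a: "a \<in> V" and b: "b \<in> V" and ab: "T a = T b"
  have "T (a - b) = T a - T b" by (rule HV.lin_t_diff[OF T_lin])
  then have "T (a - b) = 0" using ab by simp
  then have "a - b = 0" using T_inj0[of "a - b"] Vdiff[OF a b] by blast
  then show "a = b" by simp
qed

lemma injT: "inj_on T V" by (rule inj_onI) (rule T_inj)

abbreviation "\<iota> \<equiv> iota sc D S P y"

lemma iota_T: "a \<in> V \<Longrightarrow> \<iota> (T a) = a"
  unfolding iota_def by (rule inv_into_f_f[OF injT])
lemma iota_V: "x \<in> W \<Longrightarrow> \<iota> x \<in> V"
proof -
  assume "x \<in> W"
  then have "x \<in> T ` V" using W_eq by simp
  then show ?thesis unfolding iota_def by (rule inv_into_into)
qed
lemma T_iota: "x \<in> W \<Longrightarrow> T (\<iota> x) = x"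
proof -
  assume "x \<in> W"
  then have "x \<in> T ` V" using W_eq by simp
  then show ?thesis unfolding iota_def by (rule f_inv_into_f)
qed

lemma W_lin: "x \<in> W \<Longrightarrow> x' \<in> W \<Longrightarrow> sc c x + x' \<in> W \<and> \<iota> (sc c x + x') = sc c (\<iota> x) + \<iota> x'"
proof -
  assume x: "x \<in> W" and x': "x' \<in> W"
  have e: "sc c x + x' = T (sc c (\<iota> x) + \<iota> x')"
    using T_iota[OF x] T_iota[OF x'] T_lin unfolding lin_t_def by simp
  have v: "sc c (\<iota> x) + \<iota> x' \<in> V" using Vlin iota_V x x' by blast
  show ?thesis using e v iota_T[OF v] W_eq by auto
qed

lemma W0: "0 \<in> W" using W_eq V0 HV.lin_t_zero[OF T_lin] by force
lemma Wsubspace: "HV.s1.subspace W"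
  unfolding HV.s1.subspace_def using W0 W_lin[of _ _ 1] W_lin[of _ 0] by simp

lemma f_ex: "\<exists>f. lin_map sc f \<and> (\<forall>x\<in>W. f x = \<iota> x)"
proof -
  interpret VP2: vector_space_pair sc sc using vs by (simp add: vector_space_pair_def)
  obtain BW where BW: "BW \<subseteq> W" "HV.s1.independent BW" "W \<subseteq> HV.s1.span BW"
    using HV.s1.maximal_independent_subset by blast
  obtain g where g: "Vector_Spaces.linear sc sc g" "\<forall>x\<in>BW. g x = \<iota> x"
    using VP2.linear_independent_extend[OF BW(2)] by blast
  have gl: "lin_t sc sc g" using HV.linear_lin_t[OF g(1)] .
  have iota0: "\<iota> 0 = 0" using iota_T[OF V0] HV.lin_t_zero[OF T_lin] by simp
  have "HV.s1.span BW \<subseteq> {x. x \<in> W \<and> g x = \<iota> x}"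
  proof (rule HV.s1.span_minimal)
    show "BW \<subseteq> {x. x \<in> W \<and> g x = \<iota> x}" using BW g by auto
    show "HV.s1.subspace {x. x \<in> W \<and> g x = \<iota> x}"
      unfolding HV.s1.subspace_def
    proof (intro conjI ballI allI)
      show "0 \<in> {x. x \<in> W \<and> g x = \<iota> x}" using W0 HV.lin_t_zero[OF gl] iota0 by simp
    next
      fix x z assume "x \<in> {x. x \<in> W \<and> g x = \<iota> x}" "z \<in> {x. x \<in> W \<and> g x = \<iota> x}"
      then show "x + z \<in> {x. x \<in> W \<and> g x = \<iota> x}"
        using W_lin[of x z 1] HV.lin_t_add[OF gl] by simp
    next
      fix c x assume "x \<in> {x. x \<in> W \<and> g x = \<iota> x}"
      then show "sc c x \<in> {x. x \<in> W \<and> g x = \<iota> x}"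
        using W_lin[of x 0 c] W0 HV.lin_t_scale[OF gl] iota0 by simp
    qed
  qed
  then show ?thesis using BW(3) gl unfolding lin_map_t by blast
qed

definition "f0 = (SOME f. lin_map sc f \<and> (\<forall>x\<in>W. f x = \<iota> x))"
lemma f0: "lin_t sc sc f0" "\<And>x. x \<in> W \<Longrightarrow> f0 x = \<iota> x"
  using someI_ex[OF f_ex] unfolding f0_def lin_map_t by auto

lemma z_eq: "zy sc D S P y = (\<Sum>(a,b)\<leftarrow>D P. b * f0 a)"
  unfolding zy_def f0_def Let_def ..

lemma SW: "x \<in> W \<Longrightarrow> c \<in> V \<Longrightarrow> S c * x \<in> W \<and> f0 (S c * x) = f0 x * c"
proof -
  assume x: "x \<in> W" and c: "c \<in> V"
  have a: "\<iota> x \<in> V" using iota_V[OF x] .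
  have "S c * x = T (\<iota> x * c)" using T_iota[OF x] S_antimult by (simp add: mult.assoc)
  moreover have v: "\<iota> x * c \<in> V" using Vmul a c by blast
  ultimately have m: "S c * x \<in> W" using W_eq by blast
  have "f0 (S c * x) = \<iota> (S c * x)" using f0(2)[OF m] .
  also have "\<dots> = \<iota> x * c" using \<open>S c * x = T (\<iota> x * c)\<close> iota_T[OF v] by simp
  finally show ?thesis using m f0(2)[OF x] by simp
qed

lemma Om1: "lin_t sc (*) \<psi> \<Longrightarrow> (\<Sum>(a,b)\<leftarrow>D P. sc (\<psi> b) (f0 a)) \<in> V"
proof -
  assume \<psi>: "lin_t sc (*) \<psi>"
  have "(\<Sum>(a,b)\<leftarrow>D P. sc (\<psi> b) (f0 a)) = f0 (\<Sum>(a,b)\<leftarrow>D P. sc (\<psi> b) a)"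
    by (rule HV.lin_t_sum_pairs[OF f0(1), symmetric])
  then show ?thesis using PV_mem[OF \<psi>] f0(2) iota_V by simp
qed

lemma Om2: "lin_t sc (*) \<phi> \<Longrightarrow> (\<Sum>(a,b)\<leftarrow>D P. sc (\<phi> (f0 a)) b) \<in> V"
  by (rule VP_mem[of "\<lambda>x. \<phi> (f0 x)"]) (rule linK_comp[OF _ f0(1)])

lemma F8:
  assumes c: "c \<in> V" and \<phi>: "lin_t sc (*) \<phi>" and \<psi>: "lin_t sc (*) \<psi>"
  shows "(\<Sum>(a,b)\<leftarrow>D P. \<phi> (f0 a * c) * \<psi> b) = (\<Sum>(a,b)\<leftarrow>D P. \<phi> (f0 a) * \<psi> (c*b))"
proof -
  obtain \<nu> where \<nu>: "lin_t sc (*) \<nu>" "c = (\<Sum>(a,b)\<leftarrow>D P. sc (\<nu> a) b)" using VP_obt[OF c] by blast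
  have \<phi>f: "lin_t sc (*) (\<lambda>x. \<phi> (f0 x))" by (rule linK_comp[OF \<phi> f0(1)])
  define X where "X = (\<Sum>(a,b)\<leftarrow>D P. sc (\<psi> b) a)"
  have X: "X \<in> W" unfolding X_def by (rule PV_mem[OF \<psi>])
  have "(\<Sum>(a,b)\<leftarrow>D P. \<phi> (f0 a) * \<psi> (c*b)) = (\<Sum>(a,b)\<leftarrow>D P. \<phi> (f0 (S c * a)) * \<psi> b)"
    using R2[OF G1 \<nu>(1) \<phi>f \<psi>] \<nu>(2) by simp
  also have "\<dots> = (\<Sum>(a,b)\<leftarrow>D P. \<psi> b * \<phi> (f0 (S c * a)))" by (simp add: mult.commute)
  also have "\<dots> = \<phi> (f0 (S c * X))"
    unfolding X_def
    by (rule HK.lin_t_sum_pairs[symmetric]) (intro linK_comp[OF \<phi>] lin_comp[OF f0(1)] lin_rules)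
  also have "\<dots> = \<phi> (f0 X * c)" using SW[OF X c] by simp
  also have "\<dots> = (\<Sum>(a,b)\<leftarrow>D P. \<psi> b * \<phi> (f0 a * c))"
    unfolding X_def
    by (rule HK.lin_t_sum_pairs) (intro linK_comp[OF \<phi>] lin_mult_r f0(1))
  also have "\<dots> = (\<Sum>(a,b)\<leftarrow>D P. \<phi> (f0 a * c) * \<psi> b)" by (simp add: mult.commute)
  finally show ?thesis by simp
qed

lemma sum_map_pairs: "(\<Sum>(u,v)\<leftarrow>map (\<lambda>(a,b). (g a b, h a b)) xs. F u v) = (\<Sum>(a,b)\<leftarrow>xs. F (g a b) (h a b))"
  by (induction xs) auto

lemma F8t:
  assumes c: "c \<in> V"
  shows "tens_eq sc (map (\<lambda>(a,b). (f0 a * c, b)) (D P)) (map (\<lambda>(a,b). (f0 a, c * b)) (D P))"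
  unfolding tens_eq_def lin_fun_t sum_map_pairs using F8[OF c] by blast

lemma z_comm: "c \<in> V \<Longrightarrow> zy sc D S P y * c = c * zy sc D S P y"
proof -
  assume c: "c \<in> V"
  have "(\<Sum>(u,v)\<leftarrow>map (\<lambda>(a,b). (f0 a * c, b)) (D P). v * u) = (\<Sum>(u,v)\<leftarrow>map (\<lambda>(a,b). (f0 a, c * b)) (D P). v * u)"
    by (rule HV.transfer2[OF F8t[OF c]]) (auto intro: lin_rules)
  then have eq: "(\<Sum>(a,b)\<leftarrow>D P. b * (f0 a * c)) = (\<Sum>(a,b)\<leftarrow>D P. (c * b) * f0 a)"
    unfolding sum_map_pairs .
  have "zy sc D S P y * c = (\<Sum>(a,b)\<leftarrow>D P. b * (f0 a * c))"
    unfolding z_eq sum_list_mult_right_pairs by (simp only: mult.assoc)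
  also have "\<dots> = (\<Sum>(a,b)\<leftarrow>D P. (c * b) * f0 a)" by (rule eq)
  also have "\<dots> = c * zy sc D S P y"
    unfolding z_eq sum_list_mult_left_pairs by (simp only: mult.assoc)
  finally show ?thesis .
qed

end

lemma sum_pairs_diff:
  fixes F G :: "'a \<Rightarrow> 'b \<Rightarrow> 'c::ab_group_add"
  shows "(\<Sum>(a,b)\<leftarrow>xs. F a b - G a b) = (\<Sum>(a,b)\<leftarrow>xs. F a b) - (\<Sum>(a,b)\<leftarrow>xs. G a b)"
  by (induction xs) auto

context mctx begin

lemma lin_diff: "lin_t sc sc f \<Longrightarrow> lin_t sc sc g \<Longrightarrow> lin_t sc sc (\<lambda>x. f x - g x)"
  unfolding lin_t_def by (simp add: HV.s1.scale_right_diff_distrib)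

lemma sum_in:
  assumes "finite C" "\<And>g. g \<in> C \<Longrightarrow> h g \<in> J" "0 \<in> J" "\<And>x z. x \<in> J \<Longrightarrow> z \<in> J \<Longrightarrow> x + z \<in> J"
  shows "sum h C \<in> J"
  using assms by (induction C rule: finite_induct) auto

lemma proj_ex:
  assumes inv: "invertible_in V (zy sc D S P y)" and J: "submodule V V (*) J"
  shows "\<exists>p. good_proj V J p"
proof -
  interpret VP2: vector_space_pair sc sc using vs by (simp add: vector_space_pair_def)
  define z where "z = zy sc D S P y"
  obtain w where w: "w \<in> V" "z * w = e" "w * z = e" "z \<in> V"
    using inv unfolding invertible_in_def z_def e_def by blast
  have wc: "w * c = c * w" if c: "c \<in> V" for c
  proof -
    have "w * c = w * (c * e)" using e_props(3)[OF c] by simp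
    also have "\<dots> = w * (c * z) * w" using w(2) by (simp add: mult.assoc)
    also have "\<dots> = w * (z * c) * w" using z_comm[OF c] unfolding z_def by simp
    also have "\<dots> = (w * z) * c * w" by (simp add: mult.assoc)
    also have "\<dots> = c * w" using w(3) e_props(2)[OF c] by simp
    finally show ?thesis .
  qed
  have JV: "J \<subseteq> V" and J0: "0 \<in> J" and Jadd: "\<And>x z. x \<in> J \<Longrightarrow> z \<in> J \<Longrightarrow> x + z \<in> J"
    and Jneg: "\<And>x. x \<in> J \<Longrightarrow> - x \<in> J" and Jmul: "\<And>x c. x \<in> J \<Longrightarrow> c \<in> V \<Longrightarrow> x * c \<in> J"
    using J unfolding submodule_def by blast+
  have Jsc: "sc c x \<in> J" if "x \<in> J" for c x
  proof -
    have "sc c x = x * sc c e" using e_props(3) that JV by (auto simp: sc_mult_right)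
    then show ?thesis using Jmul[OF that Vsc[OF e_props(1)]] by simp
  qed
  have Jsub: "HV.s1.subspace J" unfolding HV.s1.subspace_def using J0 Jadd Jsc by blast
  obtain BJ where BJ: "BJ \<subseteq> J" "HV.s1.independent BJ" "J \<subseteq> HV.s1.span BJ"
    using HV.s1.maximal_independent_subset by blast
  obtain E where E: "Vector_Spaces.linear sc sc E" "\<forall>x\<in>BJ. E x = id x" "range E = HV.s1.span (id ` BJ)"
    using VP2.linear_independent_extend_subspace[OF BJ(2), of id] by blast
  have El: "lin_t sc sc E" using HV.linear_lin_t[OF E(1)] .
  have EJ: "E x \<in> J" for x
  proof -
    have "E x \<in> HV.s1.span BJ" using E(3) by auto
    also have "HV.s1.span BJ \<subseteq> J" using HV.s1.span_minimal[OF BJ(1) Jsub] .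
    finally show ?thesis .
  qed
  have Eid: "E j = j" if "j \<in> J" for j
    using VP2.linear_eq_on[OF E(1) HV.s1.linear_id, of j BJ] BJ(3) that E(2) by auto
  define p where "p a = (\<Sum>(x,b)\<leftarrow>D P. E (a*b) * f0 x * w)" for a
  have plin: "lin_t sc sc p"
    unfolding p_def by (intro Hh.lin_t_ds_arg lin_mult_r lin_comp[OF El] lin_id)
  have pJ: "p a \<in> J" if a: "a \<in> V" for a
  proof -
    obtain C \<psi> where C: "finite C" "\<And>g. lin_t sc (*) (\<psi> g)"
      "\<And>x. x \<in> set (map snd (D P)) \<Longrightarrow> x = (\<Sum>g\<in>C. sc (\<psi> g x) g)"
      using HV.dual_exists[of "set (map snd (D P))"] by blast
    have rep: "b = (\<Sum>g\<in>C. sc (\<psi> g b) g)" if "(x,b) \<in> set (D P)" for x b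
      by (rule C(3)) (use that in \<open>auto intro!: image_eqI[where x="(x,b)"]\<close>)
    have "p a = (\<Sum>g\<in>C. E (a*g) * f0 (\<Sum>(x,b)\<leftarrow>D P. sc (\<psi> g b) x) * w)"
      unfolding p_def
      by (rule HV.expand2[OF C(1,2) rep, where F="\<lambda>x b. E (a*b) * f0 x * w"])
         (auto intro!: lin_rules lin_comp[OF El] lin_comp[OF f0(1)])
    also have "\<dots> \<in> J"
    proof (rule sum_in[OF C(1) _ J0 Jadd])
      fix g assume "g \<in> C"
      have X: "(\<Sum>(x,b)\<leftarrow>D P. sc (\<psi> g b) x) \<in> W" by (rule PV_mem[OF C(2)])
      have "f0 (\<Sum>(x,b)\<leftarrow>D P. sc (\<psi> g b) x) \<in> V" using f0(2)[OF X] iota_V[OF X] by simp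
      then show "E (a*g) * f0 (\<Sum>(x,b)\<leftarrow>D P. sc (\<psi> g b) x) * w \<in> J"
        using Jmul EJ w(1) by blast
    qed
    finally show ?thesis .
  qed
  have pfix: "p j = j" if j: "j \<in> J" for j
  proof -
    obtain C \<phi> where C: "finite C" "\<And>g. lin_t sc (*) (\<phi> g)"
      "\<And>x. x \<in> set (map fst (D P)) \<Longrightarrow> x = (\<Sum>g\<in>C. sc (\<phi> g x) g)"
      using HV.dual_exists[of "set (map fst (D P))"] by blast
    have rep: "x = (\<Sum>g\<in>C. sc (\<phi> g x) g)" if "(x,b) \<in> set (D P)" for x b
      by (rule C(3)) (use that in \<open>auto intro!: image_eqI[where x="(x,b)"]\<close>)
    have "(\<Sum>(x,b)\<leftarrow>D P. (E (j*b) - j*b) * f0 x) = (\<Sum>g\<in>C. (E (j * (\<Sum>(x,b)\<leftarrow>D P. sc (\<phi> g x) b)) - j * (\<Sum>(x,b)\<leftarrow>D P. sc (\<phi> g x) b)) * f0 g)"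
      by (rule HV.expand1[OF C(1,2) rep, where F="\<lambda>x b. (E (j*b) - j*b) * f0 x"])
         (auto intro!: lin_rules lin_comp[OF El] lin_comp[OF f0(1)] lin_diff)
    also have "\<dots> = 0"
    proof (rule sum.neutral, intro ballI)
      fix g assume "g \<in> C"
      have Y: "(\<Sum>(x,b)\<leftarrow>D P. sc (\<phi> g x) b) \<in> V" by (rule VP_mem[OF C(2)])
      have "j * (\<Sum>(x,b)\<leftarrow>D P. sc (\<phi> g x) b) \<in> J" using Jmul[OF j Y] .
      then show "(E (j * (\<Sum>(x,b)\<leftarrow>D P. sc (\<phi> g x) b)) - j * (\<Sum>(x,b)\<leftarrow>D P. sc (\<phi> g x) b)) * f0 g = 0"
        using Eid by simp
    qed
    finally have s0: "(\<Sum>(x,b)\<leftarrow>D P. E (j*b) * f0 x) = (\<Sum>(x,b)\<leftarrow>D P. j * b * f0 x)"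
      by (simp add: left_diff_distrib sum_pairs_diff)
    have "p j = (\<Sum>(x,b)\<leftarrow>D P. E (j*b) * f0 x) * w"
      unfolding p_def by (simp add: sum_list_mult_right_pairs)
    also have "\<dots> = (\<Sum>(x,b)\<leftarrow>D P. j * (b * f0 x)) * w" unfolding s0 by (simp add: mult.assoc)
    also have "\<dots> = j * z * w" unfolding z_def z_eq by (simp add: sum_list_mult_left_pairs)
    also have "\<dots> = j" using w(2) e_props(3) j JV by (auto simp: mult.assoc)
    finally show ?thesis .
  qed
  have pmul: "p (a*c) = p a * c" if a: "a \<in> V" and c: "c \<in> V" for a c
  proof -
    have "(\<Sum>(u,v)\<leftarrow>map (\<lambda>(x,b). (f0 x * c, b)) (D P). E (a*v) * u) = (\<Sum>(u,v)\<leftarrow>map (\<lambda>(x,b). (f0 x, c * b)) (D P). E (a*v) * u)"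
      by (rule HV.transfer2[OF F8t[OF c]]) (auto intro!: lin_rules lin_comp[OF El])
    then have eq: "(\<Sum>(x,b)\<leftarrow>D P. E (a*b) * (f0 x * c)) = (\<Sum>(x,b)\<leftarrow>D P. E (a*(c*b)) * f0 x)"
      unfolding sum_map_pairs .
    have "p (a*c) = (\<Sum>(x,b)\<leftarrow>D P. E (a*(c*b)) * f0 x) * w"
      unfolding p_def by (simp add: sum_list_mult_right_pairs mult.assoc)
    also have "\<dots> = (\<Sum>(x,b)\<leftarrow>D P. E (a*b) * f0 x) * c * w"
      unfolding eq[symmetric] by (simp add: sum_list_mult_right_pairs mult.assoc)
    also have "\<dots> = (\<Sum>(x,b)\<leftarrow>D P. E (a*b) * f0 x) * w * c"
      using wc[OF c] by (simp add: mult.assoc)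
    also have "\<dots> = p a * c" unfolding p_def by (simp add: sum_list_mult_right_pairs)
    finally show ?thesis .
  qed
  have "good_proj V J p"
    unfolding good_proj_def using pJ pfix pmul HV.lin_t_add[OF plin] by blast
  then show ?thesis by blast
qed

end

theorem mainTheorem20:
  fixes sc :: "'k::field \<Rightarrow> 'h::ring_1 \<Rightarrow> 'h"
    and D :: "'h \<Rightarrow> ('h \<times> 'h) list" and eps :: "'h \<Rightarrow> 'k" and S :: "'h \<Rightarrow> 'h"
    and P y :: 'h
  assumes "hopf_algebra sc D eps S"
    and "right_group_like_proj sc D P"
    and "frobenius sc (VP sc D P)"
    and "cyclic_elem sc D S P y"
    and "invertible_in (VP sc D P) (zy sc D S P y)"
  shows "(\<forall>(M :: 'm::ab_group_add set) act.
            right_module (VP sc D P) (alg_unit (VP sc D P)) M act \<longrightarrow>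
            completely_reducible (VP sc D P) M act)
         \<and> semisimple_alg (VP sc D P)"
proof -
  have mc: "mctx sc D eps S P y"
    unfolding mctx_def mctx_axioms_def hctx_def using assms by blast
  interpret MC: mctx sc D eps S P y by (rule mc)
  have proj: "\<And>J. submodule (VP sc D P) (VP sc D P) (*) J \<Longrightarrow> \<exists>p. good_proj (VP sc D P) J p"
    using MC.proj_ex[OF assms(5)] by blast
  have eV: "alg_unit (VP sc D P) \<in> VP sc D P" using MC.e_props(1) unfolding MC.e_def .
  have gen: "completely_reducible (VP sc D P) M act"
    if rm: "right_module (VP sc D P) (alg_unit (VP sc D P)) M act" for M :: "'n::ab_group_add set" and act
  proof -
    interpret R: rmod "VP sc D P" "alg_unit (VP sc D P)" M act
      by (unfold_locales) (use MC.V0 MC.Vadd MC.Vmul MC.Vneg eV rm in auto)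
    show ?thesis by (rule R.cr[OF proj])
  qed
  have rmV: "right_module (VP sc D P) (alg_unit (VP sc D P)) (VP sc D P) (*)"
    unfolding right_module_def
    using MC.V0 MC.Vadd MC.Vmul MC.Vneg MC.e_props(3)[unfolded MC.e_def]
    by (auto simp: distrib_left distrib_right mult.assoc)
  show ?thesis
    using gen gen[OF rmV] unfolding semisimple_alg_def by blast
qed


end
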